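(* Let $\mathcal{A}$ be an abelian von Neumann algebra with Gelfand spectrum $\Omega$, and let $\beta:\Omega\to\mathcal{Q}(\mathcal{A})$, $\beta(\tau)=\{P\in\mathcal{P}(\mathcal{A}) : \tau(P)=1\}$, be the homeomorphism of the Gelfand spectrum onto the Stone spectrum. Then for every $A\in\mathcal{A}_{sa}$ and every $\tau\in\Omega$, $f_A(\beta(\tau))=\tau(A)$; i.e. up to $\beta$, the map $A\mapsto f_A$ from $\mathcal{A}_{sa}$ onto $C(\mathcal{Q}(\mathcal{A}),\mathbb{R})$ is the restriction of the Gelfand transformation to $\mathcal{A}_{sa}$.
   Context: $\Omega$ is the set of nonzero multiplicative positive linear functionals on $\mathcal{A}$ with the weak*-topology. $\mathcal{P}(\mathcal{A})$ is the lattice of projections of $\mathcal{A}$. A quasipoint of $\mathcal{P}(\mathcal{A})$ is a maximal subset $\mathfrak{B}$ with $0\notin\mathfrak{B}$ such that for all $P,Q\in\mathfrak{B}$ there is $R\in\mathfrak{B}$ with $R\le P\wedge Q$; $\mathcal{Q}(\mathcal{A})$ is the set of quasipoints with the topology generated by the basis $\{\mathfrak{B}: P\in\mathfrak{B}\}$, $P\in\mathcal{P}(\mathcal{A})$. For $A\in\mathcal{A}_{sa}$ with right-continuous spectral family $(E^A_\lambda)$, $f_A(\mathfrak{B}):=\inf\{\lambda : E^A_\lambda\in\mathfrak{B}\}$. *)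

theory Defs
  imports Complex_Main
begin

text \<open>Inner product is conjugate-linear in the first and linear in the second argument.\<close>

class complex_hilbert = ab_group_add +
  fixes scaleC :: "complex \<Rightarrow> 'a \<Rightarrow> 'a" (infixr "*\<^sub>C" 75)
  fixes cinner :: "'a \<Rightarrow> 'a \<Rightarrow> complex"
  assumes scaleC_add_right: "a *\<^sub>C (x + y) = a *\<^sub>C x + a *\<^sub>C y"
    and scaleC_add_left: "(a + b) *\<^sub>C x = a *\<^sub>C x + b *\<^sub>C x"
    and scaleC_scaleC: "a *\<^sub>C (b *\<^sub>C x) = (a * b) *\<^sub>C x"
    and scaleC_one: "1 *\<^sub>C x = x"
    and cinner_conj: "cinner x y = cnj (cinner y x)"
    and cinner_add_right: "cinner x (y + z) = cinner x y + cinner x z"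
    and cinner_scaleC_right: "cinner x (a *\<^sub>C y) = a * cinner x y"
    and cinner_pos: "x \<noteq> 0 \<Longrightarrow> 0 < Re (cinner x x)"
    and complete:
      "(\<And>e. e > 0 \<Longrightarrow> \<exists>N::nat. \<forall>m\<ge>N. \<forall>n\<ge>N.
            sqrt (Re (cinner (X m - X n) (X m - X n))) < e) \<Longrightarrow>
       \<exists>L. \<forall>e>0. \<exists>N::nat. \<forall>n\<ge>N. sqrt (Re (cinner (X n - L) (X n - L))) < e"

definition hnorm :: "'h::complex_hilbert \<Rightarrow> real" where
  "hnorm x = sqrt (Re (cinner x x))"

definition bounded_op :: "('h::complex_hilbert \<Rightarrow> 'h) \<Rightarrow> bool" where
  "bounded_op T \<longleftrightarrow> (\<forall>x y. T (x + y) = T x + T y) \<and> (\<forall>a x. T (a *\<^sub>C x) = a *\<^sub>C T x)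
      \<and> (\<exists>K. \<forall>x. hnorm (T x) \<le> K * hnorm x)"

definition bops :: "('h::complex_hilbert \<Rightarrow> 'h) set" where
  "bops = {T. bounded_op T}"

definition adj :: "('h::complex_hilbert \<Rightarrow> 'h) \<Rightarrow> ('h \<Rightarrow> 'h)" where
  "adj T = (THE S. \<forall>x y. cinner (T x) y = cinner x (S y))"

definition commutant :: "('h::complex_hilbert \<Rightarrow> 'h) set \<Rightarrow> ('h \<Rightarrow> 'h) set" where
  "commutant S = {T \<in> bops. \<forall>A\<in>S. T \<circ> A = A \<circ> T}"

definition op_le :: "('h::complex_hilbert \<Rightarrow> 'h) \<Rightarrow> ('h \<Rightarrow> 'h) \<Rightarrow> bool" where
  "op_le S T \<longleftrightarrow> (\<forall>x. cinner x (T x - S x) \<in> \<real> \<and> 0 \<le> Re (cinner x (T x - S x)))"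

definition zero_op :: "'h::complex_hilbert \<Rightarrow> 'h" where
  "zero_op = (\<lambda>x. 0)"

text \<open>A von Neumann algebra: a self-adjoint set of bounded operators equal to its
  bicommutant (equivalently, by the bicommutant theorem, a weakly closed unital *-subalgebra).\<close>
definition von_neumann_algebra :: "('h::complex_hilbert \<Rightarrow> 'h) set \<Rightarrow> bool" where
  "von_neumann_algebra M \<longleftrightarrow> M \<subseteq> bops \<and> (\<forall>A\<in>M. adj A \<in> M)
      \<and> commutant (commutant M) = M"

definition abelian :: "('h::complex_hilbert \<Rightarrow> 'h) set \<Rightarrow> bool" where
  "abelian M \<longleftrightarrow> (\<forall>A\<in>M. \<forall>B\<in>M. A \<circ> B = B \<circ> A)"

definition self_adjoints :: "('h::complex_hilbert \<Rightarrow> 'h) set \<Rightarrow> ('h \<Rightarrow> 'h) set" where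
  "self_adjoints M = {A \<in> M. adj A = A}"

definition projections :: "('h::complex_hilbert \<Rightarrow> 'h) set \<Rightarrow> ('h \<Rightarrow> 'h) set" where
  "projections M = {P \<in> M. P \<circ> P = P \<and> adj P = P}"

definition gelfand_spectrum :: "('h::complex_hilbert \<Rightarrow> 'h) set \<Rightarrow> (('h \<Rightarrow> 'h) \<Rightarrow> complex) set" where
  "gelfand_spectrum M = {\<tau>.
     (\<forall>A\<in>M. \<forall>B\<in>M. \<tau> (\<lambda>x. A x + B x) = \<tau> A + \<tau> B)
   \<and> (\<forall>A\<in>M. \<forall>a. \<tau> (\<lambda>x. a *\<^sub>C A x) = a * \<tau> A)
   \<and> (\<forall>A\<in>M. \<forall>B\<in>M. \<tau> (A \<circ> B) = \<tau> A * \<tau> B)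
   \<and> (\<forall>A\<in>M. op_le zero_op A \<longrightarrow> \<tau> A \<in> \<real> \<and> 0 \<le> Re (\<tau> A))
   \<and> (\<exists>A\<in>M. \<tau> A \<noteq> 0)}"

definition filter_base :: "('h::complex_hilbert \<Rightarrow> 'h) set \<Rightarrow> ('h \<Rightarrow> 'h) set \<Rightarrow> bool" where
  "filter_base M B \<longleftrightarrow> B \<subseteq> projections M \<and> zero_op \<notin> B
     \<and> (\<forall>P\<in>B. \<forall>Q\<in>B. \<exists>R\<in>B. op_le R P \<and> op_le R Q)"

definition quasipoints :: "('h::complex_hilbert \<Rightarrow> 'h) set \<Rightarrow> ('h \<Rightarrow> 'h) set set" where
  "quasipoints M = {B. filter_base M B \<and> (\<forall>C. filter_base M C \<and> B \<subseteq> C \<longrightarrow> C = B)}"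

definition beta :: "('h::complex_hilbert \<Rightarrow> 'h) set \<Rightarrow> (('h \<Rightarrow> 'h) \<Rightarrow> complex) \<Rightarrow> ('h \<Rightarrow> 'h) set" where
  "beta M \<tau> = {P \<in> projections M. \<tau> P = 1}"

text \<open>Right-continuous spectral family: the greatest projection P of M with AP \<le> \<lambda>P.\<close>
definition spectral_proj :: "('h::complex_hilbert \<Rightarrow> 'h) set \<Rightarrow> ('h \<Rightarrow> 'h) \<Rightarrow> real \<Rightarrow> ('h \<Rightarrow> 'h)" where
  "spectral_proj M A l = (THE P. P \<in> projections M
       \<and> op_le (A \<circ> P) (\<lambda>x. complex_of_real l *\<^sub>C P x)
       \<and> (\<forall>Q\<in>projections M. op_le (A \<circ> Q) (\<lambda>x. complex_of_real l *\<^sub>C Q x) \<longrightarrow> op_le Q P))"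

definition obs_fun :: "('h::complex_hilbert \<Rightarrow> 'h) set \<Rightarrow> ('h \<Rightarrow> 'h) \<Rightarrow> ('h \<Rightarrow> 'h) set \<Rightarrow> real" where
  "obs_fun M A B = Inf {l. spectral_proj M A l \<in> B}"

end

theory Submission
  imports Defs "HOL-Computational_Algebra.Polynomial"
begin

lemma scaleC_zero_left [simp]: "(0::complex) *\<^sub>C (x::'h::complex_hilbert) = 0"
proof -
  have "(0 + 0) *\<^sub>C x = 0 *\<^sub>C x + 0 *\<^sub>C x" by (rule scaleC_add_left)
  then show ?thesis by simp
qed

lemma scaleC_zero_right [simp]: "a *\<^sub>C (0::'h::complex_hilbert) = 0"
proof -
  have "a *\<^sub>C (0 + 0) = a *\<^sub>C (0::'h) + a *\<^sub>C 0" by (rule scaleC_add_right)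
  then show ?thesis by simp
qed

lemma scaleC_minus_left: "(- a) *\<^sub>C (x::'h::complex_hilbert) = - (a *\<^sub>C x)"
proof -
  have "(a + - a) *\<^sub>C x = a *\<^sub>C x + (- a) *\<^sub>C x" by (rule scaleC_add_left)
  then show ?thesis using minus_unique[of "a *\<^sub>C x" "(-a) *\<^sub>C x"] by simp
qed

lemma scaleC_minus_right: "a *\<^sub>C (- x::'h::complex_hilbert) = - (a *\<^sub>C x)"
proof -
  have "a *\<^sub>C (x + - x) = a *\<^sub>C x + a *\<^sub>C (- x)" by (rule scaleC_add_right)
  then show ?thesis using minus_unique[of "a *\<^sub>C x" "a *\<^sub>C (- x)"] by simp
qed

lemma scaleC_diff_right: "a *\<^sub>C (x - y::'h::complex_hilbert) = a *\<^sub>C x - a *\<^sub>C y"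
  unfolding diff_conv_add_uminus by (simp only: scaleC_add_right scaleC_minus_right)

lemma scaleC_diff_left: "(a - b) *\<^sub>C (x::'h::complex_hilbert) = a *\<^sub>C x - b *\<^sub>C x"
  using scaleC_add_left[of a "-b" x] by (simp add: scaleC_minus_left)

lemma scaleC_minus_one: "(-1) *\<^sub>C (x::'h::complex_hilbert) = - x"
  by (simp add: scaleC_minus_left scaleC_one)

lemma cinner_add_left: "cinner (x + y) (z::'h::complex_hilbert) = cinner x z + cinner y z"
  by (metis cinner_conj cinner_add_right complex_cnj_add)

lemma cinner_scaleC_left: "cinner (a *\<^sub>C x) (y::'h::complex_hilbert) = cnj a * cinner x y"
  by (metis cinner_conj cinner_scaleC_right complex_cnj_mult)

lemma cinner_zero_right [simp]: "cinner x (0::'h::complex_hilbert) = 0"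
  using cinner_scaleC_right[of x 0 0] by simp

lemma cinner_zero_left [simp]: "cinner (0::'h::complex_hilbert) x = 0"
  using cinner_scaleC_left[of 0 0 x] by simp

lemma cinner_minus_right: "cinner x (- y::'h::complex_hilbert) = - cinner x y"
  using cinner_scaleC_right[of x "-1" y] by (simp add: scaleC_minus_one)

lemma cinner_minus_left: "cinner (- x::'h::complex_hilbert) y = - cinner x y"
  using cinner_scaleC_left[of "-1" x y] by (simp add: scaleC_minus_one)

lemma cinner_diff_right: "cinner x (y - z::'h::complex_hilbert) = cinner x y - cinner x z"
  unfolding diff_conv_add_uminus by (simp only: cinner_add_right cinner_minus_right)

lemma cinner_diff_left: "cinner (x - y::'h::complex_hilbert) z = cinner x z - cinner y z"
  unfolding diff_conv_add_uminus by (simp only: cinner_add_left cinner_minus_left)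

lemma cinner_self_Im: "Im (cinner x (x::'h::complex_hilbert)) = 0"
  using cinner_conj[of x x] by (metis cnj.simps(2) complex.expand cnj.sel(1) neg_equal_zero)

lemma cinner_self_real: "cinner x (x::'h::complex_hilbert) = complex_of_real (Re (cinner x x))"
  using cinner_self_Im[of x] by (simp add: complex_eq_iff)

lemma cinner_self_nonneg: "0 \<le> Re (cinner x (x::'h::complex_hilbert))"
proof (cases "x = 0")
  case True then show ?thesis using cinner_zero_left[of x] by simp
next
  case False then show ?thesis using cinner_pos[of x] by simp
qed

lemma cinner_self_eq_zero [simp]: "cinner x x = 0 \<longleftrightarrow> x = (0::'h::complex_hilbert)"
proof
  assume h: "cinner x x = 0"
  show "x = 0"
  proof (rule ccontr)
    assume "x \<noteq> 0"
    then have "0 < Re (cinner x x)" by (rule cinner_pos)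
    then show False using h by simp
  qed
qed simp

lemma hnorm_sq: "(hnorm x)\<^sup>2 = Re (cinner x (x::'h::complex_hilbert))"
  by (simp add: hnorm_def cinner_self_nonneg)

lemma hnorm_nonneg [simp]: "0 \<le> hnorm x"
  by (simp add: hnorm_def cinner_self_nonneg)

lemma cinner_self_hnorm: "cinner x (x::'h::complex_hilbert) = complex_of_real ((hnorm x)\<^sup>2)"
  by (metis cinner_self_real hnorm_sq)

lemma hnorm_zero [simp]: "hnorm (0::'h::complex_hilbert) = 0"
  by (simp add: hnorm_def)

lemma hnorm_eq_zero [simp]: "hnorm x = 0 \<longleftrightarrow> x = (0::'h::complex_hilbert)"
proof -
  have "hnorm x = 0 \<longleftrightarrow> (hnorm x)\<^sup>2 = 0" by simp
  also have "\<dots> \<longleftrightarrow> cinner x x = 0" by (simp add: cinner_self_hnorm)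
  finally show ?thesis by simp
qed

lemma hnorm_scaleC: "hnorm (a *\<^sub>C x) = cmod a * hnorm (x::'h::complex_hilbert)"
proof -
  have "cinner (a *\<^sub>C x) (a *\<^sub>C x) = (cnj a * a) * cinner x x"
    by (simp add: cinner_scaleC_left cinner_scaleC_right)
  also have "cnj a * a = complex_of_real ((cmod a)\<^sup>2)"
    by (metis complex_norm_square mult.commute)
  finally have "Re (cinner (a *\<^sub>C x) (a *\<^sub>C x)) = (cmod a)\<^sup>2 * Re (cinner x x)"
    by (metis Re_complex_of_real cinner_self_real of_real_mult)
  then have "hnorm (a *\<^sub>C x) = sqrt ((cmod a)\<^sup>2 * Re (cinner x x))"
    unfolding hnorm_def by simp
  also have "\<dots> = sqrt ((cmod a)\<^sup>2) * sqrt (Re (cinner x x))" by (rule real_sqrt_mult)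
  also have "\<dots> = cmod a * hnorm x" unfolding hnorm_def by simp
  finally show ?thesis .
qed

lemma hnorm_minus: "hnorm (- x) = hnorm (x::'h::complex_hilbert)"
  by (simp add: hnorm_def cinner_minus_left cinner_minus_right)

lemma hnorm_minus_commute: "hnorm (x - y) = hnorm (y - x::'h::complex_hilbert)"
  by (metis hnorm_minus minus_diff_eq)

lemma gen_CS:
  fixes s :: "'h::complex_hilbert \<Rightarrow> 'h \<Rightarrow> complex"
  assumes add_l: "\<And>x y z. s (x + y) z = s x z + s y z"
    and add_r: "\<And>x y z. s x (y + z) = s x y + s x z"
    and sc_l: "\<And>a x y. s (a *\<^sub>C x) y = cnj a * s x y"
    and sc_r: "\<And>a x y. s x (a *\<^sub>C y) = a * s x y"
    and herm: "\<And>x y. s y x = cnj (s x y)"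
    and pos: "\<And>x. s x x \<in> \<real> \<and> 0 \<le> Re (s x x)"
  shows "(cmod (s x y))\<^sup>2 \<le> Re (s x x) * Re (s y y)"
proof -
  define w where "w = s x y"
  define a where "a = Re (s x x)"
  define c where "c = Re (s y y)"
  have sxx: "s x x = complex_of_real a" using pos[of x] by (simp add: a_def complex_is_Real_iff complex_eq_iff)
  have syy: "s y y = complex_of_real c" using pos[of y] by (simp add: c_def complex_is_Real_iff complex_eq_iff)
  have a0: "0 \<le> a" and c0: "0 \<le> c" using pos by (auto simp: a_def c_def)
  have key: "0 \<le> a - 2 * r * (cmod w)\<^sup>2 + r\<^sup>2 * (cmod w)\<^sup>2 * c" for r :: real
  proof -
    define t where "t = - complex_of_real r * cnj w"
    have "s (x + t *\<^sub>C y) (x + t *\<^sub>C y) = s x x + t * s x y + cnj t * s y x + cnj t * t * s y y"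
      by (simp add: add_l add_r sc_l sc_r algebra_simps)
    also have "\<dots> = complex_of_real (a - 2 * r * (cmod w)\<^sup>2 + r\<^sup>2 * (cmod w)\<^sup>2 * c)"
    proof -
      have hsyx: "s y x = cnj w" unfolding w_def by (rule herm)
      have cm: "cmod w * cmod w = Re w * Re w + Im w * Im w"
        using cmod_power2[of w] by (simp add: power2_eq_square)
      show ?thesis unfolding t_def sxx syy hsyx w_def[symmetric]
        by (simp add: complex_eq_iff algebra_simps power2_eq_square cm)
    qed
    finally have "Re (s (x + t *\<^sub>C y) (x + t *\<^sub>C y)) = a - 2 * r * (cmod w)\<^sup>2 + r\<^sup>2 * (cmod w)\<^sup>2 * c"
      by simp
    then show ?thesis using pos[of "x + t *\<^sub>C y"] by simp
  qed
  show ?thesis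
  proof (cases "c = 0")
    case True
    have "(cmod w)\<^sup>2 = 0"
    proof (rule ccontr)
      assume ne: "(cmod w)\<^sup>2 \<noteq> 0"
      then have p: "(cmod w)\<^sup>2 > 0" by (simp add: order_le_neq_trans)
      have "0 \<le> a - 2 * ((a + 1) / (cmod w)\<^sup>2) * (cmod w)\<^sup>2" using key[of "(a+1)/(cmod w)\<^sup>2"] True by simp
      then show False using p a0 by simp
    qed
    then show ?thesis using True a0 unfolding a_def[symmetric] c_def[symmetric] w_def[symmetric] by simp
  next
    case False
    then have cp: "c > 0" using c0 by simp
    have "0 \<le> a - 2 * (1/c) * (cmod w)\<^sup>2 + (1/c)\<^sup>2 * (cmod w)\<^sup>2 * c" by (rule key)
    then have "0 \<le> a - (cmod w)\<^sup>2 / c" using cp by (simp add: power2_eq_square field_simps)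
    then have "(cmod w)\<^sup>2 \<le> a * c" using cp by (simp add: field_simps)
    then show ?thesis by (simp add: w_def a_def c_def)
  qed
qed

lemma cauchy_schwarz: "cmod (cinner x y) \<le> hnorm x * hnorm (y::'h::complex_hilbert)"
proof -
  have "(cmod (cinner x y))\<^sup>2 \<le> Re (cinner x x) * Re (cinner y y)"
  proof (rule gen_CS[where s = cinner])
    show "cinner y x = cnj (cinner x y)" for x y :: 'h by (rule cinner_conj)
    show "cinner x x \<in> \<real> \<and> 0 \<le> Re (cinner x x)" for x :: 'h
      by (metis Reals_of_real cinner_self_nonneg cinner_self_real)
  qed (simp_all add: cinner_add_left cinner_add_right cinner_scaleC_left cinner_scaleC_right)
  also have "\<dots> = (hnorm x * hnorm y)\<^sup>2" by (simp add: hnorm_sq power_mult_distrib)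
  finally have h: "(cmod (cinner x y))\<^sup>2 \<le> (hnorm x * hnorm y)\<^sup>2" .
  have "0 \<le> hnorm x * hnorm y" by simp
  from power2_le_imp_le[OF h this] show ?thesis .
qed

lemma Re_cinner_le: "Re (cinner x y) \<le> hnorm x * hnorm (y::'h::complex_hilbert)"
  using cauchy_schwarz[of x y] complex_Re_le_cmod order_trans by blast

lemma hnorm_triangle: "hnorm (x + y) \<le> hnorm x + hnorm (y::'h::complex_hilbert)"
proof -
  have "Re (cinner (x+y) (x+y)) = Re (cinner x x) + Re (cinner y y) + Re (cinner x y) + Re (cinner y x)"
    by (simp add: cinner_add_left cinner_add_right)
  also have "\<dots> \<le> (hnorm x)\<^sup>2 + (hnorm y)\<^sup>2 + hnorm x * hnorm y + hnorm y * hnorm x"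
    using Re_cinner_le[of x y] Re_cinner_le[of y x] by (simp add: hnorm_sq mult.commute)
  also have "\<dots> = (hnorm x + hnorm y)\<^sup>2" by (simp add: power2_eq_square algebra_simps)
  finally have "(hnorm (x+y))\<^sup>2 \<le> (hnorm x + hnorm y)\<^sup>2" by (simp add: hnorm_sq)
  then show ?thesis by (rule power2_le_imp_le) simp
qed

lemma hnorm_diff_triangle: "hnorm (x - z) \<le> hnorm (x - y) + hnorm (y - (z::'h::complex_hilbert))"
  using hnorm_triangle[of "x - y" "y - z"] by simp

lemma hnorm_diff_le: "hnorm x - hnorm y \<le> hnorm (x - (y::'h::complex_hilbert))"
  using hnorm_triangle[of "x - y" y] by simp

lemma hnorm_diff_abs: "\<bar>hnorm x - hnorm y\<bar> \<le> hnorm (x - (y::'h::complex_hilbert))"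
  using hnorm_diff_le[of x y] hnorm_diff_le[of y x] hnorm_minus_commute[of x y] by linarith


section \<open>Convergence in the Hilbert space\<close>

definition hlim :: "(nat \<Rightarrow> 'h::complex_hilbert) \<Rightarrow> 'h \<Rightarrow> bool" where
  "hlim X L \<longleftrightarrow> (\<lambda>n. hnorm (X n - L)) \<longlonglongrightarrow> 0"

lemma hlim_const: "hlim (\<lambda>n. c) c"
  by (simp add: hlim_def)

lemma hlim_unique:
  assumes "hlim X a" "hlim X b" shows "a = b"
proof -
  have le: "hnorm (a - b) \<le> hnorm (X n - a) + hnorm (X n - b)" for n
    using hnorm_diff_triangle[where x=a and y="X n" and z=b] hnorm_minus_commute[of a "X n"] hnorm_minus_commute[of b "X n"] by simp
  have "(\<lambda>n. hnorm (X n - a) + hnorm (X n - b)) \<longlonglongrightarrow> 0 + 0"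
    using assms unfolding hlim_def by (rule tendsto_add)
  then have "hnorm (a - b) \<le> 0"
    using le by (intro tendsto_lowerbound[of "\<lambda>n. hnorm (X n - a) + hnorm (X n - b)"]) (auto intro: always_eventually)
  then show ?thesis using hnorm_nonneg[of "a - b"] by simp
qed

lemma real_squeeze:
  fixes g h :: "nat \<Rightarrow> real"
  assumes "\<And>n. 0 \<le> g n" "\<And>n. g n \<le> h n" "h \<longlonglongrightarrow> 0"
  shows "g \<longlonglongrightarrow> 0"
  by (rule tendsto_sandwich[of "\<lambda>n. 0" g]) (use assms in auto)

lemma hlim_squeeze:
  assumes "\<And>n. hnorm (X n - L) \<le> f n" "f \<longlonglongrightarrow> 0"
  shows "hlim X L"
  unfolding hlim_def
  by (rule tendsto_sandwich[of "\<lambda>n. 0" _ _ f]) (use assms in auto)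

lemma hlim_add:
  assumes "hlim X a" "hlim Y b" shows "hlim (\<lambda>n. X n + Y n) (a + b)"
proof (rule hlim_squeeze)
  show "hnorm (X n + Y n - (a + b)) \<le> hnorm (X n - a) + hnorm (Y n - b)" for n
    using hnorm_triangle[of "X n - a" "Y n - b"] by (simp add: algebra_simps)
  show "(\<lambda>n. hnorm (X n - a) + hnorm (Y n - b)) \<longlonglongrightarrow> 0"
    using tendsto_add[OF assms[unfolded hlim_def]] by simp
qed

lemma hlim_minus:
  assumes "hlim X a" shows "hlim (\<lambda>n. - X n) (- a)"
proof -
  have "hnorm (- X n - - a) = hnorm (X n - a)" for n
    by (metis hnorm_minus minus_diff_eq minus_diff_minus)
  then show ?thesis using assms unfolding hlim_def by simp
qed

lemma hlim_diff:
  assumes "hlim X a" "hlim Y b" shows "hlim (\<lambda>n. X n - Y n) (a - b)"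
  using hlim_add[OF assms(1) hlim_minus[OF assms(2)]] by simp

lemma hlim_scaleC:
  assumes "hlim X a" shows "hlim (\<lambda>n. c *\<^sub>C X n) (c *\<^sub>C a)"
proof -
  have "(\<lambda>n. cmod c * hnorm (X n - a)) \<longlonglongrightarrow> cmod c * 0"
    using assms unfolding hlim_def by (intro tendsto_mult) auto
  then show ?thesis unfolding hlim_def
    by (simp add: scaleC_diff_right[symmetric] hnorm_scaleC)
qed

lemma hlim_shift:
  assumes "hlim X a" shows "hlim (\<lambda>n. X (Suc n)) a"
  using assms unfolding hlim_def by (rule LIMSEQ_Suc)

lemma hlim_cinner_right:
  assumes "hlim X a" shows "(\<lambda>n. cinner y (X n)) \<longlonglongrightarrow> cinner y a"
proof -
  have h: "(\<lambda>n. hnorm y * hnorm (X n - a)) \<longlonglongrightarrow> 0"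
    using assms unfolding hlim_def using tendsto_mult[OF tendsto_const, of _ 0 sequentially "hnorm y"] by simp
  have "(\<lambda>n. cmod (cinner y (X n) - cinner y a)) \<longlonglongrightarrow> 0"
    by (rule real_squeeze[OF _ _ h]) (auto simp: cinner_diff_right[symmetric] cauchy_schwarz)
  then show ?thesis
    by (simp add: tendsto_iff dist_norm LIMSEQ_iff)
qed

lemma hlim_cinner_left:
  assumes "hlim X a" shows "(\<lambda>n. cinner (X n) y) \<longlonglongrightarrow> cinner a y"
proof -
  have "(\<lambda>n. cnj (cinner y (X n))) \<longlonglongrightarrow> cnj (cinner y a)"
    using hlim_cinner_right[OF assms] by (rule tendsto_cnj)
  then show ?thesis by (metis (no_types, lifting) ext cinner_conj)
qed

lemma hlim_hnorm:
  assumes "hlim X a" shows "(\<lambda>n. hnorm (X n)) \<longlonglongrightarrow> hnorm a"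
proof -
  have "(\<lambda>n. \<bar>hnorm (X n) - hnorm a\<bar>) \<longlonglongrightarrow> 0"
    using assms unfolding hlim_def
    by (rule real_squeeze[rotated 2]) (auto simp: hnorm_diff_abs)
  then show ?thesis
    by (simp add: LIMSEQ_iff)
qed

lemma hlim_Cauchy:
  assumes "\<And>e. e > 0 \<Longrightarrow> \<exists>N. \<forall>m\<ge>N. \<forall>n\<ge>N. hnorm (X m - X n) < e"
  shows "\<exists>L. hlim X L"
proof -
  obtain L where L: "\<forall>e>0. \<exists>N::nat. \<forall>n\<ge>N. sqrt (Re (cinner (X n - L) (X n - L))) < e"
    using complete[of X] assms unfolding hnorm_def by blast
  have "hlim X L" unfolding hlim_def LIMSEQ_iff using L by (simp add: hnorm_def cinner_self_nonneg)
  then show ?thesis ..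
qed

lemma bounded_opD:
  assumes "bounded_op T"
  shows "T (x + y) = T x + T y" "T (a *\<^sub>C x) = a *\<^sub>C T x"
  using assms unfolding bounded_op_def by auto

lemma bounded_op_bound:
  assumes "bounded_op T" obtains K where "K > 0" "\<And>x. hnorm (T x) \<le> K * hnorm x"
proof -
  obtain K where K: "\<And>x. hnorm (T x) \<le> K * hnorm x" using assms unfolding bounded_op_def by blast
  have "hnorm (T x) \<le> (\<bar>K\<bar> + 1) * hnorm x" for x
    using K[of x] hnorm_nonneg[of x] by (smt (verit) mult_right_mono)
  then show ?thesis using that[of "\<bar>K\<bar> + 1"] by simp
qed

lemma bounded_op_zero: "bounded_op T \<Longrightarrow> T 0 = 0"
  using bounded_opD(2)[of T 0 0] by simp

lemma bounded_op_minus: "bounded_op T \<Longrightarrow> T (- x) = - T x"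
  using bounded_opD(2)[of T "-1" x] by (simp add: scaleC_minus_one)

lemma bounded_op_diff: "bounded_op T \<Longrightarrow> T (x - y) = T x - T y"
  by (metis bounded_opD(1) bounded_op_minus diff_conv_add_uminus)

lemma bounded_op_real: "bounded_op T \<Longrightarrow> T (complex_of_real r *\<^sub>C x) = complex_of_real r *\<^sub>C T x"
  by (rule bounded_opD(2))

lemma hlim_bounded_op:
  assumes "bounded_op T" "hlim X a" shows "hlim (\<lambda>n. T (X n)) (T a)"
proof -
  obtain K where K: "K > 0" "\<And>x. hnorm (T x) \<le> K * hnorm x" using bounded_op_bound[OF assms(1)] by blast
  show ?thesis
  proof (rule hlim_squeeze)
    show "hnorm (T (X n) - T a) \<le> K * hnorm (X n - a)" for n
      using K(2)[of "X n - a"] by (simp add: bounded_op_diff[OF assms(1)])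
    show "(\<lambda>n. K * hnorm (X n - a)) \<longlonglongrightarrow> 0"
      using tendsto_mult[OF tendsto_const assms(2)[unfolded hlim_def], of K] by simp
  qed
qed

lemma bounded_op_id: "bounded_op (\<lambda>x. x)"
  unfolding bounded_op_def by (auto intro!: exI[of _ 1])

lemma bounded_op_comp: "bounded_op S \<Longrightarrow> bounded_op T \<Longrightarrow> bounded_op (S \<circ> T)"
proof -
  assume S: "bounded_op S" and T: "bounded_op T"
  obtain K1 where K1: "K1 > 0" "\<And>x. hnorm (S x) \<le> K1 * hnorm x" using bounded_op_bound[OF S] by blast
  obtain K2 where K2: "K2 > 0" "\<And>x. hnorm (T x) \<le> K2 * hnorm x" using bounded_op_bound[OF T] by blast
  have "hnorm (S (T x)) \<le> (K1 * K2) * hnorm x" for x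
    using K1(2)[of "T x"] K2(2)[of x] K1(1) by (smt (verit) mult.assoc mult_left_mono)
  then show ?thesis using S T unfolding bounded_op_def by auto
qed

lemma bounded_op_add: "bounded_op S \<Longrightarrow> bounded_op T \<Longrightarrow> bounded_op (\<lambda>x. S x + T x)"
proof -
  assume S: "bounded_op S" and T: "bounded_op T"
  obtain K1 where K1: "K1 > 0" "\<And>x. hnorm (S x) \<le> K1 * hnorm x" using bounded_op_bound[OF S] by blast
  obtain K2 where K2: "K2 > 0" "\<And>x. hnorm (T x) \<le> K2 * hnorm x" using bounded_op_bound[OF T] by blast
  have "hnorm (S x + T x) \<le> (K1 + K2) * hnorm x" for x
    using K1(2)[of x] K2(2)[of x] hnorm_triangle[of "S x" "T x"] by (simp add: algebra_simps)
  moreover have "S (x + y) + T (x + y) = S x + T x + (S y + T y)" for x y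
    using S T by (simp add: bounded_opD algebra_simps)
  moreover have "S (a *\<^sub>C x) + T (a *\<^sub>C x) = a *\<^sub>C (S x + T x)" for a x
    using S T by (simp add: bounded_opD scaleC_add_right)
  ultimately show ?thesis unfolding bounded_op_def by blast
qed

lemma bounded_op_scale: "bounded_op T \<Longrightarrow> bounded_op (\<lambda>x. c *\<^sub>C T x)"
proof -
  assume T: "bounded_op T"
  obtain K where K: "K > 0" "\<And>x. hnorm (T x) \<le> K * hnorm x" using bounded_op_bound[OF T] by blast
  have "hnorm (c *\<^sub>C T x) \<le> (cmod c * K) * hnorm x" for x
    using K(2)[of x] by (simp add: hnorm_scaleC mult.assoc mult_left_mono)
  moreover have "c *\<^sub>C T (x + y) = c *\<^sub>C T x + c *\<^sub>C T y" for x y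
    using T by (simp add: bounded_opD scaleC_add_right)
  moreover have "c *\<^sub>C T (a *\<^sub>C x) = a *\<^sub>C (c *\<^sub>C T x)" for a x
    using T by (simp add: bounded_opD scaleC_scaleC mult.commute)
  ultimately show ?thesis unfolding bounded_op_def by blast
qed

lemma bounded_op_diff_op: "bounded_op S \<Longrightarrow> bounded_op T \<Longrightarrow> bounded_op (\<lambda>x. S x - T x)"
proof -
  assume "bounded_op S" "bounded_op T"
  then have "bounded_op (\<lambda>x. S x + (-1) *\<^sub>C T x)" by (intro bounded_op_add bounded_op_scale)
  then show ?thesis by (simp add: scaleC_minus_one)
qed

lemma bounded_op_const0: "bounded_op (\<lambda>x. (0::'h::complex_hilbert))"
  unfolding bounded_op_def by (auto intro!: exI[of _ 1])

section \<open>Symmetric operators, polarization\<close>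

definition hsym :: "('h::complex_hilbert \<Rightarrow> 'h) \<Rightarrow> bool" where
  "hsym T \<longleftrightarrow> (\<forall>x y. cinner (T x) y = cinner x (T y))"

definition pos :: "('h::complex_hilbert \<Rightarrow> 'h) \<Rightarrow> bool" where
  "pos T \<longleftrightarrow> (\<forall>x. cinner x (T x) \<in> \<real> \<and> 0 \<le> Re (cinner x (T x)))"

lemma op_le_pos: "op_le S T \<longleftrightarrow> pos (\<lambda>x. T x - S x)"
  by (simp add: op_le_def pos_def)

lemma hsym_form_real: "hsym T \<Longrightarrow> cinner x (T x) \<in> \<real>"
  unfolding hsym_def by (metis Reals_cnj_iff cinner_conj)

lemma polarization_sym:
  assumes T: "bounded_op T" and r: "\<And>x. cinner x (T x) \<in> \<real>"
  shows "hsym T"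
proof -
  define s where "s x y = cinner x (T y) - cinner (T x) y" for x y
  have s0: "s x x = 0" for x
    using r[of x] unfolding s_def by (metis Reals_cnj_iff cinner_conj diff_self)
  have sadd: "s (x + y) (x + y) = s x x + s y y + s x y + s y x" for x y
    unfolding s_def using T by (simp add: bounded_opD cinner_add_left cinner_add_right algebra_simps)
  have ssc: "s (x + \<i> *\<^sub>C y) (x + \<i> *\<^sub>C y) = s x x + s y y + \<i> * s x y - \<i> * s y x" for x y
    unfolding s_def using T
    by (simp add: bounded_opD cinner_add_left cinner_add_right cinner_scaleC_left cinner_scaleC_right algebra_simps)
  have "s x y = 0" for x y
  proof -
    have e1: "s x y + s y x = 0" using sadd[of x y] by (simp add: s0)
    have e2: "s x y - s y x = 0" using ssc[of x y] by (simp add: s0 right_diff_distrib[symmetric])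
    from e1 e2 show ?thesis by (simp add: algebra_simps)
  qed
  then show ?thesis unfolding hsym_def s_def by (metis eq_iff_diff_eq_0)
qed

lemma pos_hsym: "bounded_op T \<Longrightarrow> pos T \<Longrightarrow> hsym T"
  by (rule polarization_sym) (auto simp: pos_def)

lemma form_zero_op:
  assumes T: "bounded_op T" and z: "\<And>x. cinner x (T x) = 0"
  shows "T x = 0"
proof -
  have s1: "hsym T" using T by (rule polarization_sym) (simp add: z)
  have T2: "bounded_op (\<lambda>x. \<i> *\<^sub>C T x)" using T by (rule bounded_op_scale)
  have s2: "hsym (\<lambda>x. \<i> *\<^sub>C T x)"
    by (rule polarization_sym[OF T2]) (simp add: z cinner_scaleC_right)
  have "cinner (T x) (T x) = 0"
  proof -
    have a: "cinner (T x) y = cinner x (T y)" for y using s1 unfolding hsym_def by blast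
    have b: "cinner (\<i> *\<^sub>C T x) y = cinner x (\<i> *\<^sub>C T y)" for y using s2 unfolding hsym_def by blast
    have "- \<i> * cinner (T x) (T x) = \<i> * cinner (T x) (T x)"
      using b[of "T x"] a[of "T x"] by (simp add: cinner_scaleC_left cinner_scaleC_right)
    then show ?thesis by simp
  qed
  then show ?thesis by simp
qed

lemma op_ext_form:
  assumes "bounded_op S" "bounded_op T" "\<And>x. cinner x (S x) = cinner x (T x)"
  shows "S = T"
proof
  fix x
  have "bounded_op (\<lambda>x. S x - T x)" using assms(1,2) by (rule bounded_op_diff_op)
  then have "S x - T x = 0" by (rule form_zero_op) (simp add: cinner_diff_right assms(3))
  then show "S x = T x" by simp
qed

lemma cinner_ext: "(\<And>y. cinner y a = cinner y b) \<Longrightarrow> a = (b::'h::complex_hilbert)"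
  by (metis cinner_diff_right cinner_self_eq_zero eq_iff_diff_eq_0)


section \<open>Riesz representation and adjoints\<close>

lemma real_lin_zero:
  fixes b q :: real
  assumes q: "q \<ge> 0" and h: "\<And>r. 0 \<le> 2 * r * b + r\<^sup>2 * q"
  shows "b = 0"
proof (rule ccontr)
  assume b: "b \<noteq> 0"
  define r where "r = - b / (q + 1)"
  have q1: "q + 1 > 0" using q by simp
  have hr: "r * (q + 1) = - b" unfolding r_def using q1 by simp
  have "(q + 1)\<^sup>2 * (2 * r * b + r\<^sup>2 * q) = 2 * b * (r * (q + 1)) * (q + 1) + (r * (q + 1))\<^sup>2 * q"
    by (simp add: power2_eq_square algebra_simps)
  also have "\<dots> = - (b\<^sup>2 * (q + 2))" unfolding hr by (simp add: power2_eq_square algebra_simps)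
  also have "\<dots> < 0" using b q by (simp add: add_pos_nonneg)
  finally have "(q + 1)\<^sup>2 * (2 * r * b + r\<^sup>2 * q) < 0" .
  moreover have "0 \<le> (q + 1)\<^sup>2 * (2 * r * b + r\<^sup>2 * q)" using h[of r] by simp
  ultimately show False by simp
qed

lemma hnorm_add_scale_sq:
  "(hnorm (x + t *\<^sub>C k))\<^sup>2 = (hnorm x)\<^sup>2 + 2 * Re (t * cinner x k) + (cmod t)\<^sup>2 * (hnorm (k::'h::complex_hilbert))\<^sup>2"
proof -
  have e: "cinner (x + t *\<^sub>C k) (x + t *\<^sub>C k) = cinner x x + t * cinner x k + cnj t * cinner k x + (cnj t * t) * cinner k k"
    by (simp add: cinner_add_left cinner_add_right cinner_scaleC_left cinner_scaleC_right algebra_simps)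
  have r1: "Re (cnj t * cinner k x) = Re (t * cinner x k)"
    by (metis cinner_conj complex_cnj_mult cnj.sel(1))
  have r2: "Re ((cnj t * t) * cinner k k) = (cmod t)\<^sup>2 * (hnorm k)\<^sup>2"
  proof -
    have "cnj t * t = complex_of_real ((cmod t)\<^sup>2)" by (metis complex_norm_square mult.commute)
    then show ?thesis by (simp add: cinner_self_hnorm del: of_real_power)
  qed
  show ?thesis unfolding hnorm_sq[of "x + t *\<^sub>C k"] hnorm_sq[of x] e plus_complex.sel r1 r2 by simp
qed

lemma riesz:
  fixes f :: "'h::complex_hilbert \<Rightarrow> complex"
  assumes add: "\<And>x y. f (x + y) = f x + f y" and sc: "\<And>a x. f (a *\<^sub>C x) = a * f x"
    and bnd: "\<And>x. cmod (f x) \<le> K * hnorm x"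
  shows "\<exists>z. \<forall>x. f x = cinner z x"
proof (cases "\<forall>x. f x = 0")
  case True
  then show ?thesis by (intro exI[of _ 0]) simp
next
  case False
  have f0: "f 0 = 0" using sc[of 0 0] by simp
  have fdiff: "f (x - y) = f x - f y" for x y
    using add[of x "(-1) *\<^sub>C y"] sc[of "-1" y] by (simp add: scaleC_minus_one)
  obtain u where u: "f u \<noteq> 0" using False by blast
  define C where "C = {x. f x = 1}"
  define d where "d = Inf (hnorm ` C)"
  have u1: "(1 / f u) *\<^sub>C u \<in> C" using u by (simp add: C_def sc)
  have ne: "hnorm ` C \<noteq> {}" using u1 by blast
  have bdd: "bdd_below (hnorm ` C)" by (rule bdd_belowI[of _ 0]) auto
  have dle: "x \<in> C \<Longrightarrow> d \<le> hnorm x" for x unfolding d_def using bdd by (auto intro: cInf_lower)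
  have d0: "0 \<le> d" unfolding d_def using ne by (auto intro: cInf_greatest)
  have "\<exists>x\<in>C. hnorm x < d + 1 / real (Suc n)" for n
  proof -
    have "Inf (hnorm ` C) < d + 1 / real (Suc n)" unfolding d_def by simp
    then obtain v where "v \<in> hnorm ` C" "v < d + 1 / real (Suc n)" using cInf_lessD[OF ne] by blast
    then show ?thesis by auto
  qed
  then obtain xs where xsC: "\<And>n. xs n \<in> C" and xsn: "\<And>n. hnorm (xs n) < d + 1 / real (Suc n)"
    by metis
  have mid: "2 * d \<le> hnorm (x + y)" if "x \<in> C" "y \<in> C" for x y
  proof -
    have "(1/2) *\<^sub>C (x + y) \<in> C" using that by (simp add: C_def sc add)
    then have "d \<le> hnorm ((1/2) *\<^sub>C (x + y))" by (rule dle)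
    then show ?thesis by (simp add: hnorm_scaleC)
  qed
  have para: "(hnorm (x - y))\<^sup>2 + (hnorm (x + y))\<^sup>2 = 2 * (hnorm x)\<^sup>2 + 2 * (hnorm y)\<^sup>2" for x y :: 'h
    unfolding hnorm_sq by (simp add: cinner_add_left cinner_add_right cinner_diff_left cinner_diff_right)
  have cauchy: "\<exists>N. \<forall>m\<ge>N. \<forall>n\<ge>N. hnorm (xs m - xs n) < e" if e: "e > 0" for e
  proof -
    define \<delta> where "\<delta> = min 1 (e\<^sup>2 / (8 * d + 8))"
    have \<delta>0: "\<delta> > 0" using e d0 by (simp add: \<delta>_def)
    obtain N where N: "inverse (real (Suc N)) < \<delta>" using reals_Archimedean[OF \<delta>0] by blast
    have small: "1 / real (Suc n) < \<delta>" if "n \<ge> N" for n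
    proof -
      have "1 / real (Suc n) \<le> 1 / real (Suc N)" using that by (simp add: frac_le)
      then show ?thesis using N by (simp add: inverse_eq_divide)
    qed
    have "hnorm (xs m - xs n) < e" if mn: "m \<ge> N" "n \<ge> N" for m n
    proof -
      define em where "em = 1 / real (Suc m)"
      define en where "en = 1 / real (Suc n)"
      have em: "0 < em" "em < \<delta>" using small[OF mn(1)] by (auto simp: em_def)
      have en: "0 < en" "en < \<delta>" using small[OF mn(2)] by (auto simp: en_def)
      have hm: "hnorm (xs m) < d + em" using xsn[of m] by (simp add: em_def)
      have hn: "hnorm (xs n) < d + en" using xsn[of n] by (simp add: en_def)
      have "(hnorm (xs m))\<^sup>2 \<le> (d + em)\<^sup>2" using hm by (intro power_mono) auto
      moreover have "(hnorm (xs n))\<^sup>2 \<le> (d + en)\<^sup>2" using hn by (intro power_mono) auto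
      moreover have "(2 * d)\<^sup>2 \<le> (hnorm (xs m + xs n))\<^sup>2" using mid[OF xsC xsC] d0 by (intro power_mono) auto
      ultimately have "(hnorm (xs m - xs n))\<^sup>2 \<le> 2 * (d + em)\<^sup>2 + 2 * (d + en)\<^sup>2 - (2 * d)\<^sup>2"
        using para[of "xs m" "xs n"] by linarith
      also have "\<dots> = 4 * d * em + 2 * em\<^sup>2 + 4 * d * en + 2 * en\<^sup>2" by (simp add: power2_eq_square algebra_simps)
      also have "\<dots> \<le> 4 * d * \<delta> + 2 * \<delta> + 4 * d * \<delta> + 2 * \<delta>"
      proof -
        have "em\<^sup>2 \<le> \<delta>" using em \<delta>_def by (smt (verit) min.boundedE mult_less_cancel_left2 power2_eq_square)
        moreover have "en\<^sup>2 \<le> \<delta>" using en \<delta>_def by (smt (verit) min.boundedE mult_less_cancel_left2 power2_eq_square)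
        moreover have "4 * d * em \<le> 4 * d * \<delta>" using em d0 by (intro mult_left_mono) auto
        moreover have "4 * d * en \<le> 4 * d * \<delta>" using en d0 by (intro mult_left_mono) auto
        ultimately show ?thesis by linarith
      qed
      also have "\<dots> = (8 * d + 4) * \<delta>" by (simp add: algebra_simps)
      also have "\<dots> < e\<^sup>2"
      proof -
        have "(8 * d + 4) * \<delta> \<le> (8 * d + 4) * (e\<^sup>2 / (8 * d + 8))"
          using d0 by (intro mult_left_mono) (auto simp: \<delta>_def)
        also have "\<dots> < e\<^sup>2" using d0 e by (simp add: field_simps)
        finally show ?thesis .
      qed
      finally have "(hnorm (xs m - xs n))\<^sup>2 < e\<^sup>2" .
      then show ?thesis using e by (smt (verit) hnorm_nonneg power_mono)
    qed
    then show ?thesis by blast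
  qed
  obtain x0 where x0: "hlim xs x0" using hlim_Cauchy[OF cauchy] by blast
  have fx0: "f x0 = 1"
  proof -
    have le: "cmod (1 - f x0) \<le> K * hnorm (xs n - x0)" for n
      using bnd[of "xs n - x0"] xsC[of n] by (simp add: fdiff C_def)
    have "(\<lambda>n. K * hnorm (xs n - x0)) \<longlonglongrightarrow> K * 0"
      using x0 unfolding hlim_def by (intro tendsto_mult) auto
    then have "cmod (1 - f x0) \<le> 0"
      using le by (intro tendsto_lowerbound[of "\<lambda>n. K * hnorm (xs n - x0)"]) (auto intro: always_eventually)
    then show ?thesis by simp
  qed
  have x0min: "hnorm x0 \<le> hnorm y" if "y \<in> C" for y
  proof -
    have "(\<lambda>n. hnorm (xs n)) \<longlonglongrightarrow> hnorm x0" using x0 by (rule hlim_hnorm)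
    moreover have "(\<lambda>n. d + 1 / real (Suc n)) \<longlonglongrightarrow> d + 0"
      by (intro tendsto_add tendsto_const LIMSEQ_Suc[OF lim_const_over_n])
    ultimately have "hnorm x0 \<le> d + 0"
      using xsn by (intro LIMSEQ_le[of "\<lambda>n. hnorm (xs n)" _ "\<lambda>n. d + 1 / real (Suc n)"]) (auto intro: less_imp_le)
    then show ?thesis using dle[OF that] by simp
  qed
  have ortho: "cinner x0 k = 0" if fk: "f k = 0" for k
  proof -
    define v where "v = cinner x0 k"
    have inC: "x0 + t *\<^sub>C k \<in> C" for t using fk fx0 by (simp add: C_def add sc)
    have ineq: "0 \<le> 2 * Re (t * v) + (cmod t)\<^sup>2 * (hnorm k)\<^sup>2" for t
    proof -
      have "(hnorm x0)\<^sup>2 \<le> (hnorm (x0 + t *\<^sub>C k))\<^sup>2" using x0min[OF inC[of t]] by (intro power_mono) auto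
      then show ?thesis unfolding hnorm_add_scale_sq v_def by simp
    qed
    have "Re v = 0"
    proof (rule real_lin_zero[of "(hnorm k)\<^sup>2"])
      show "0 \<le> 2 * r * Re v + r\<^sup>2 * (hnorm k)\<^sup>2" for r
        using ineq[of "complex_of_real r"] by (simp add: power2_abs)
    qed simp
    moreover have "- Im v = 0"
    proof (rule real_lin_zero[of "(hnorm k)\<^sup>2"])
      show "0 \<le> 2 * r * (- Im v) + r\<^sup>2 * (hnorm k)\<^sup>2" for r
        using ineq[of "\<i> * complex_of_real r"] by (simp add: norm_mult power2_abs)
    qed simp
    ultimately show ?thesis by (simp add: v_def complex_eq_iff)
  qed
  define c where "c = cinner x0 x0"
  have x0ne: "x0 \<noteq> 0" using fx0 f0 by auto
  have c0: "c \<noteq> 0" using x0ne by (simp add: c_def)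
  have rep: "cinner x0 x = f x * c" for x
  proof -
    have "f (x - f x *\<^sub>C x0) = 0" by (simp add: fdiff sc fx0)
    then have "cinner x0 (x - f x *\<^sub>C x0) = 0" by (rule ortho)
    then show ?thesis by (simp add: cinner_diff_right cinner_scaleC_right c_def)
  qed
  show ?thesis
  proof (intro exI allI)
    fix x
    show "f x = cinner (cnj (1 / c) *\<^sub>C x0) x"
      using c0 by (simp add: cinner_scaleC_left rep)
  qed
qed

lemma adjoint_exists:
  assumes T: "bounded_op T"
  shows "\<exists>S. \<forall>x y. cinner (T x) y = cinner x (S y)"
proof -
  obtain K where K: "K > 0" "\<And>x. hnorm (T x) \<le> K * hnorm x" using bounded_op_bound[OF T] by blast
  have "\<exists>z. \<forall>x. cinner y (T x) = cinner z x" for y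
  proof (rule riesz[where K = "hnorm y * K"])
    show "cinner y (T (x + z)) = cinner y (T x) + cinner y (T z)" for x z
      using T by (simp add: bounded_opD cinner_add_right)
    show "cinner y (T (a *\<^sub>C x)) = a * cinner y (T x)" for a x
      using T by (simp add: bounded_opD cinner_scaleC_right)
    show "cmod (cinner y (T x)) \<le> hnorm y * K * hnorm x" for x
      using cauchy_schwarz[of y "T x"] K(2)[of x]
      by (smt (verit) hnorm_nonneg mult.assoc mult_left_mono)
  qed
  then obtain S where S: "\<And>y x. cinner y (T x) = cinner (S y) x" by metis
  have "cinner (T x) y = cinner x (S y)" for x y
    by (metis S cinner_conj)
  then show ?thesis by blast
qed

lemma adj_unique:
  assumes "\<forall>x y. cinner (T x) y = cinner x (S1 y)" "\<forall>x y. cinner (T x) y = cinner x (S2 y)"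
  shows "S1 = S2"
proof
  fix y
  show "S1 y = S2 y" by (rule cinner_ext) (metis assms)
qed

lemma adj_char:
  assumes T: "bounded_op T"
  shows "cinner (T x) y = cinner x (adj T y)"
proof -
  obtain S where S: "\<forall>x y. cinner (T x) y = cinner x (S y)" using adjoint_exists[OF T] by blast
  have "\<exists>!S. \<forall>x y. cinner (T x) y = cinner x (S y)"
    using S adj_unique by blast
  then have "\<forall>x y. cinner (T x) y = cinner x (adj T y)"
    unfolding adj_def by (rule theI')
  then show ?thesis by blast
qed

lemma adj_self_iff:
  assumes T: "bounded_op T"
  shows "adj T = T \<longleftrightarrow> hsym T"
proof
  assume "adj T = T"
  then show "hsym T" unfolding hsym_def using adj_char[OF T] by metis
next
  assume h: "hsym T"
  have "\<forall>x y. cinner (T x) y = cinner x (T y)" using h unfolding hsym_def by blast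
  moreover have "\<forall>x y. cinner (T x) y = cinner x (adj T y)" using adj_char[OF T] by blast
  ultimately show "adj T = T" using adj_unique by metis
qed


lemma pos_op_norm_bound:
  assumes D: "bounded_op D" and s: "hsym D"
    and p: "\<And>y. 0 \<le> Re (cinner y (D y))" and b: "\<And>y. Re (cinner y (D y)) \<le> Kd * (hnorm y)\<^sup>2"
  shows "(hnorm (D x))\<^sup>2 \<le> Kd * Re (cinner x (D x))"
proof -
  have cs: "(cmod (cinner x (D (D x))))\<^sup>2 \<le> Re (cinner x (D x)) * Re (cinner (D x) (D (D x)))"
  proof (rule gen_CS[where s = "\<lambda>x y. cinner x (D y)"])
    show "cinner y (D x) = cnj (cinner x (D y))" for x y
      using s unfolding hsym_def by (metis cinner_conj)
    show "cinner x (D x) \<in> \<real> \<and> 0 \<le> Re (cinner x (D x))" for x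
      using hsym_form_real[OF s] p by blast
  qed (simp_all add: D bounded_opD cinner_add_left cinner_add_right cinner_scaleC_left cinner_scaleC_right)
  have e: "cinner x (D (D x)) = complex_of_real ((hnorm (D x))\<^sup>2)"
    using s unfolding hsym_def by (metis cinner_self_hnorm)
  have main: "(hnorm (D x))\<^sup>2 * (hnorm (D x))\<^sup>2 \<le> Re (cinner x (D x)) * (Kd * (hnorm (D x))\<^sup>2)"
  proof -
    have "(hnorm (D x))\<^sup>2 * (hnorm (D x))\<^sup>2 = (cmod (cinner x (D (D x))))\<^sup>2"
      unfolding e norm_of_real by (simp add: power2_eq_square)
    also have "\<dots> \<le> Re (cinner x (D x)) * Re (cinner (D x) (D (D x)))" by (rule cs)
    also have "\<dots> \<le> Re (cinner x (D x)) * (Kd * (hnorm (D x))\<^sup>2)"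
      using p[of x] b[of "D x"] by (intro mult_left_mono) auto
    finally show ?thesis .
  qed
  then show ?thesis
  proof (cases "hnorm (D x) = 0")
    case True
    then show ?thesis using p[of x] b[of 0] by (simp add: mult_nonneg_nonneg)
  next
    case False
    then have "(hnorm (D x))\<^sup>2 > 0" by simp
    have "(hnorm (D x))\<^sup>2 * (hnorm (D x))\<^sup>2 \<le> (Kd * Re (cinner x (D x))) * (hnorm (D x))\<^sup>2"
      using main by (simp only: mult.commute mult.left_commute)
    then show ?thesis using \<open>(hnorm (D x))\<^sup>2 > 0\<close> by (rule mult_right_le_imp_le)
  qed
qed

section \<open>Von Neumann algebra basics\<close>

locale vna =
  fixes M :: "('h::complex_hilbert \<Rightarrow> 'h) set"
  assumes vn: "von_neumann_algebra M" and ab: "abelian M"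
begin

lemma bops: "A \<in> M \<Longrightarrow> bounded_op A"
  using vn unfolding von_neumann_algebra_def bops_def by auto

lemma memI:
  assumes "bounded_op T" "\<And>S. S \<in> commutant M \<Longrightarrow> (\<lambda>x. T (S x)) = (\<lambda>x. S (T x))"
  shows "T \<in> M"
proof -
  have "T \<in> commutant (commutant M)"
    using assms unfolding commutant_def bops_def by (auto simp: o_def)
  then show ?thesis using vn unfolding von_neumann_algebra_def by simp
qed

lemma commD:
  assumes "S \<in> commutant M" "A \<in> M" shows "S (A x) = A (S x)" "bounded_op S"
  using assms unfolding commutant_def bops_def by (auto simp: o_def fun_eq_iff)

lemma commute: "A \<in> M \<Longrightarrow> B \<in> M \<Longrightarrow> A (B x) = B (A x)"
  using ab unfolding abelian_def by (auto simp: o_def fun_eq_iff)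

lemma idM: "(\<lambda>x. x) \<in> M"
  by (rule memI[OF bounded_op_id]) simp

lemma compM: "A \<in> M \<Longrightarrow> B \<in> M \<Longrightarrow> (\<lambda>x. A (B x)) \<in> M"
proof (rule memI)
  assume A: "A \<in> M" and B: "B \<in> M"
  show "bounded_op (\<lambda>x. A (B x))" using bounded_op_comp[OF bops[OF A] bops[OF B]] by (simp add: o_def)
  fix S assume S: "S \<in> commutant M"
  show "(\<lambda>x. A (B (S x))) = (\<lambda>x. S (A (B x)))" using commD(1)[OF S A] commD(1)[OF S B] by simp
qed

lemma compM': "A \<in> M \<Longrightarrow> B \<in> M \<Longrightarrow> A \<circ> B \<in> M"
  using compM by (simp add: o_def)

lemma addM: "A \<in> M \<Longrightarrow> B \<in> M \<Longrightarrow> (\<lambda>x. A x + B x) \<in> M"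
proof (rule memI)
  assume A: "A \<in> M" and B: "B \<in> M"
  show "bounded_op (\<lambda>x. A x + B x)" using bounded_op_add[OF bops[OF A] bops[OF B]] .
  fix S assume S: "S \<in> commutant M"
  show "(\<lambda>x. A (S x) + B (S x)) = (\<lambda>x. S (A x + B x))"
    using commD(1)[OF S A] commD(1)[OF S B] bounded_opD(1)[OF commD(2)[OF S A]] by simp
qed

lemma scaleM: "A \<in> M \<Longrightarrow> (\<lambda>x. c *\<^sub>C A x) \<in> M"
proof (rule memI)
  assume A: "A \<in> M"
  show "bounded_op (\<lambda>x. c *\<^sub>C A x)" using bounded_op_scale[OF bops[OF A]] .
  fix S assume S: "S \<in> commutant M"
  show "(\<lambda>x. c *\<^sub>C A (S x)) = (\<lambda>x. S (c *\<^sub>C A x))"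
    using commD(1)[OF S A] bounded_opD(2)[OF commD(2)[OF S A]] by simp
qed

lemma diffM: "A \<in> M \<Longrightarrow> B \<in> M \<Longrightarrow> (\<lambda>x. A x - B x) \<in> M"
  using addM[of A "\<lambda>x. (-1) *\<^sub>C B x"] scaleM[of B "-1"] by (simp add: scaleC_minus_one)

lemma zeroM: "(\<lambda>x. 0) \<in> M"
proof (rule memI[OF bounded_op_const0])
  fix S assume S: "S \<in> commutant M"
  show "(\<lambda>x. 0) = (\<lambda>x. S 0)" using bounded_op_zero[OF commD(2)[OF S idM]] by simp
qed

lemma limM:
  assumes XM: "\<And>n. X n \<in> M" and L: "bounded_op L" and lim: "\<And>x. hlim (\<lambda>n. X n x) (L x)"
  shows "L \<in> M"
proof (rule memI[OF L])
  fix S assume S: "S \<in> commutant M"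
  show "(\<lambda>x. L (S x)) = (\<lambda>x. S (L x))"
  proof
    fix x
    have "hlim (\<lambda>n. S (X n x)) (S (L x))" by (rule hlim_bounded_op[OF commD(2)[OF S idM] lim])
    moreover have "(\<lambda>n. S (X n x)) = (\<lambda>n. X n (S x))" using commD(1)[OF S XM] by simp
    ultimately have "hlim (\<lambda>n. X n (S x)) (S (L x))" by simp
    then show "L (S x) = S (L x)" using lim[of "S x"] hlim_unique by blast
  qed
qed

section \<open>Monotone convergence\<close>

lemma mono_conv:
  assumes XM: "\<And>n. X n \<in> M" and sym: "\<And>n. hsym (X n)"
    and inc: "\<And>n x. Re (cinner x (X n x)) \<le> Re (cinner x (X (Suc n) x))"
    and bnd: "\<And>n x. Re (cinner x (X n x)) \<le> c * (hnorm x)\<^sup>2"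
  shows "\<exists>L\<in>M. hsym L \<and> (\<forall>x. hlim (\<lambda>n. X n x) (L x)) \<and> (\<exists>K. \<forall>n x. hnorm (X n x) \<le> K * hnorm x)"
proof -
  obtain K0 where K0: "K0 > 0" "\<And>x. hnorm (X 0 x) \<le> K0 * hnorm x" using bounded_op_bound[OF bops[OF XM]] by blast
  define Kd where "Kd = \<bar>c\<bar> + K0"
  have Kd0: "Kd > 0" using K0 by (simp add: Kd_def add_nonneg_pos)
  have mono: "Re (cinner x (X n x)) \<le> Re (cinner x (X m x))" if "n \<le> m" for n m x
    using that by (induction m) (auto simp: le_Suc_eq intro: order.trans[OF _ inc])
  have low: "- K0 * (hnorm x)\<^sup>2 \<le> Re (cinner x (X n x))" for n x
  proof -
    have "\<bar>Re (cinner x (X 0 x))\<bar> \<le> hnorm x * hnorm (X 0 x)"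
      using cauchy_schwarz[of x "X 0 x"] abs_Re_le_cmod order_trans by blast
    also have "\<dots> \<le> hnorm x * (K0 * hnorm x)" by (intro mult_left_mono K0(2)) simp
    finally have "- K0 * (hnorm x)\<^sup>2 \<le> Re (cinner x (X 0 x))" by (simp add: power2_eq_square algebra_simps)
    then show ?thesis using mono[where n=0 and m=n and x=x] by simp
  qed
  define D where "D m n = (\<lambda>x. X m x - X n x)" for m n
  have Dprops: "bounded_op (D m n)" "hsym (D m n)" "\<And>y. 0 \<le> Re (cinner y (D m n y))"
    "\<And>y. Re (cinner y (D m n y)) \<le> Kd * (hnorm y)\<^sup>2"
    if "n \<le> m" for m n
  proof -
    show "bounded_op (D m n)" unfolding D_def by (intro bounded_op_diff_op bops XM)
    show "hsym (D m n)" using sym[of m] sym[of n] unfolding hsym_def D_def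
      by (simp add: cinner_diff_left cinner_diff_right)
    show "0 \<le> Re (cinner y (D m n y))" for y using mono[OF that, of y] unfolding D_def
      by (simp add: cinner_diff_right)
    show "Re (cinner y (D m n y)) \<le> Kd * (hnorm y)\<^sup>2" for y
    proof -
      have "Re (cinner y (D m n y)) = Re (cinner y (X m y)) - Re (cinner y (X n y))"
        unfolding D_def by (simp add: cinner_diff_right)
      also have "\<dots> \<le> c * (hnorm y)\<^sup>2 + K0 * (hnorm y)\<^sup>2" using bnd[where n=m and x=y] low[where n=n and x=y] by simp
      also have "\<dots> \<le> Kd * (hnorm y)\<^sup>2" unfolding Kd_def
        by (simp add: algebra_simps mult_right_mono)
      finally show ?thesis .
    qed
  qed
  have Dbound: "(hnorm (X m x - X n x))\<^sup>2 \<le> Kd * (Re (cinner x (X m x)) - Re (cinner x (X n x)))"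
    if "n \<le> m" for m n x
    using pos_op_norm_bound[OF Dprops[OF that], of x] unfolding D_def by (simp add: cinner_diff_right)
  have unif: "hnorm (X n x) \<le> (K0 + Kd) * hnorm x" for n x
  proof -
    have "(hnorm (X n x - X 0 x))\<^sup>2 \<le> Kd * (Kd * (hnorm x)\<^sup>2)"
    proof -
      have "(hnorm (X n x - X 0 x))\<^sup>2 \<le> Kd * (Re (cinner x (X n x)) - Re (cinner x (X 0 x)))"
        by (rule Dbound) simp
      also have "\<dots> \<le> Kd * (Kd * (hnorm x)\<^sup>2)"
        using Dprops(4)[of 0 n x] Kd0 unfolding D_def by (intro mult_left_mono) (simp_all add: cinner_diff_right)
      finally show ?thesis .
    qed
    also have "\<dots> = (Kd * hnorm x)\<^sup>2" by (simp add: power_mult_distrib power2_eq_square[of Kd])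
    finally have h2: "(hnorm (X n x - X 0 x))\<^sup>2 \<le> (Kd * hnorm x)\<^sup>2" .
    have "hnorm (X n x - X 0 x) \<le> Kd * hnorm x"
      by (rule power2_le_imp_le[OF h2]) (use Kd0 in simp)
    then have "hnorm (X n x) \<le> hnorm (X 0 x) + Kd * hnorm x"
      using hnorm_triangle[of "X n x - X 0 x" "X 0 x"] by simp
    then show ?thesis using K0(2)[of x] by (simp add: algebra_simps)
  qed
  have conv: "\<exists>l. hlim (\<lambda>n. X n x) l" for x
  proof (rule hlim_Cauchy)
    fix e :: real assume e: "e > 0"
    define r where "r n = Re (cinner x (X n x))" for n
    have "incseq r" unfolding r_def by (intro incseq_SucI inc)
    moreover have "\<forall>i. r i \<le> c * (hnorm x)\<^sup>2" unfolding r_def using bnd by blast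
    ultimately obtain l where "r \<longlonglongrightarrow> l" using incseq_convergent by blast
    then have "Cauchy r" by (rule LIMSEQ_imp_Cauchy)
    moreover have e2: "e\<^sup>2 / Kd > 0" using e Kd0 by simp
    ultimately obtain N where N: "\<And>m n. m \<ge> N \<Longrightarrow> n \<ge> N \<Longrightarrow> norm (r m - r n) < e\<^sup>2 / Kd"
      using CauchyD by blast
    have "hnorm (X m x - X n x) < e" if "m \<ge> N" "n \<ge> N" for m n
    proof -
      have gen: "hnorm (X m x - X n x) < e" if mn: "n \<le> m" "m \<ge> N" "n \<ge> N" for m n
      proof -
        have "(hnorm (X m x - X n x))\<^sup>2 \<le> Kd * (r m - r n)" unfolding r_def by (rule Dbound[OF mn(1)])
        also have "\<dots> < Kd * (e\<^sup>2 / Kd)" using N[OF mn(2,3)] Kd0 by (intro mult_strict_left_mono) auto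
        also have "\<dots> = e\<^sup>2" using Kd0 by simp
        finally show ?thesis using e by (smt (verit) hnorm_nonneg power_mono)
      qed
      show ?thesis
      proof (cases "n \<le> m")
        case True then show ?thesis using gen that by blast
      next
        case False then show ?thesis using gen[of m n] that hnorm_minus_commute by (metis nle_le)
      qed
    qed
    then show "\<exists>N. \<forall>m\<ge>N. \<forall>n\<ge>N. hnorm (X m x - X n x) < e" by blast
  qed
  define L where "L x = (SOME l. hlim (\<lambda>n. X n x) l)" for x
  have Llim: "hlim (\<lambda>n. X n x) (L x)" for x
    unfolding L_def using conv[of x] by (rule someI_ex)
  have Lop: "bounded_op L"
    unfolding bounded_op_def
  proof (intro conjI allI exI)
    fix x y
    have "hlim (\<lambda>n. X n x + X n y) (L x + L y)" by (intro hlim_add Llim)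
    moreover have "(\<lambda>n. X n x + X n y) = (\<lambda>n. X n (x + y))" by (simp add: bounded_opD bops XM)
    ultimately show "L (x + y) = L x + L y" using Llim hlim_unique by metis
  next
    fix a x
    have "hlim (\<lambda>n. a *\<^sub>C X n x) (a *\<^sub>C L x)" by (intro hlim_scaleC Llim)
    moreover have "(\<lambda>n. a *\<^sub>C X n x) = (\<lambda>n. X n (a *\<^sub>C x))" by (simp add: bounded_opD bops XM)
    ultimately show "L (a *\<^sub>C x) = a *\<^sub>C L x" using Llim hlim_unique by metis
  next
    fix x
    show "hnorm (L x) \<le> (K0 + Kd) * hnorm x"
      by (rule LIMSEQ_le_const2[OF hlim_hnorm[OF Llim]]) (use unif in auto)
  qed
  have LM: "L \<in> M" by (rule limM[OF XM Lop Llim])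
  have Lsym: "hsym L" unfolding hsym_def
  proof (intro allI)
    fix x y
    have "(\<lambda>n. cinner (X n x) y) \<longlonglongrightarrow> cinner (L x) y" by (rule hlim_cinner_left[OF Llim])
    moreover have "(\<lambda>n. cinner x (X n y)) \<longlonglongrightarrow> cinner x (L y)" by (rule hlim_cinner_right[OF Llim])
    moreover have "(\<lambda>n. cinner (X n x) y) = (\<lambda>n. cinner x (X n y))" using sym unfolding hsym_def by blast
    ultimately show "cinner (L x) y = cinner x (L y)" using LIMSEQ_unique by metis
  qed
  show ?thesis using LM Lsym Llim unif by blast
qed

end


lemma scaleC_sum: "c *\<^sub>C (\<Sum>k\<in>S. f k) = (\<Sum>k\<in>S. c *\<^sub>C (f k :: 'h::complex_hilbert))"
  by (induction S rule: infinite_finite_induct) (simp_all add: scaleC_add_right)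

lemma scaleC_sum_left: "(\<Sum>k\<in>S. f k) *\<^sub>C (x::'h::complex_hilbert) = (\<Sum>k\<in>S. f k *\<^sub>C x)"
  by (induction S rule: infinite_finite_induct) (simp_all add: scaleC_add_left)

lemma bounded_op_sum: "bounded_op T \<Longrightarrow> T (\<Sum>k\<in>S. f k) = (\<Sum>k\<in>S. T (f k))"
  by (induction S rule: infinite_finite_induct) (simp_all add: bounded_op_zero bounded_opD)

lemma cinner_sum_right: "cinner x (\<Sum>k\<in>S. f k) = (\<Sum>k\<in>S. cinner x (f k :: 'h::complex_hilbert))"
  by (induction S rule: infinite_finite_induct) (simp_all add: cinner_add_right)

section \<open>Polynomial evaluation at an operator\<close>

definition peval :: "real poly \<Rightarrow> ('h::complex_hilbert \<Rightarrow> 'h) \<Rightarrow> 'h \<Rightarrow> 'h" where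
  "peval p Y = (\<lambda>x. \<Sum>k\<le>degree p. complex_of_real (coeff p k) *\<^sub>C (Y ^^ k) x)"

lemma peval_N:
  assumes "degree p \<le> N"
  shows "peval p Y x = (\<Sum>k\<le>N. complex_of_real (coeff p k) *\<^sub>C (Y ^^ k) x)"
  unfolding peval_def
  by (rule sum.mono_neutral_left) (use assms in \<open>auto simp: coeff_eq_0\<close>)

lemma peval_0 [simp]: "peval 0 Y x = 0"
  by (simp add: peval_def)

lemma peval_add: "peval (p + q) Y x = peval p Y x + peval q Y x"
proof -
  define N where "N = max (degree p) (degree q)"
  have "degree (p + q) \<le> N" unfolding N_def by (rule degree_add_le_max)
  then have "peval (p + q) Y x = (\<Sum>k\<le>N. complex_of_real (coeff (p + q) k) *\<^sub>C (Y ^^ k) x)" by (rule peval_N)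
  also have "\<dots> = (\<Sum>k\<le>N. complex_of_real (coeff p k) *\<^sub>C (Y ^^ k) x) + (\<Sum>k\<le>N. complex_of_real (coeff q k) *\<^sub>C (Y ^^ k) x)"
    by (simp add: scaleC_add_left sum.distrib)
  also have "\<dots> = peval p Y x + peval q Y x"
    using peval_N[of p N Y x] peval_N[of q N Y x] by (simp add: N_def)
  finally show ?thesis .
qed

lemma peval_smult: "peval (smult a p) Y x = complex_of_real a *\<^sub>C peval p Y x"
proof -
  have "peval (smult a p) Y x = (\<Sum>k\<le>degree p. complex_of_real (coeff (smult a p) k) *\<^sub>C (Y ^^ k) x)"
    by (rule peval_N) simp
  also have "\<dots> = complex_of_real a *\<^sub>C peval p Y x"
    by (simp add: peval_def scaleC_sum scaleC_scaleC)
  finally show ?thesis .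
qed

lemma peval_minus: "peval (- p) Y x = - peval p Y x"
  using peval_smult[of "-1" p Y x] by (simp add: scaleC_minus_one)

lemma peval_diff: "peval (p - q) Y x = peval p Y x - peval q Y x"
  using peval_add[of p "- q" Y x] by (simp add: peval_minus)

lemma peval_pCons:
  assumes Y: "bounded_op Y"
  shows "peval (pCons a p) Y x = complex_of_real a *\<^sub>C x + Y (peval p Y x)"
proof -
  have "peval (pCons a p) Y x = (\<Sum>k\<le>Suc (degree p). complex_of_real (coeff (pCons a p) k) *\<^sub>C (Y ^^ k) x)"
    by (rule peval_N) (simp add: degree_pCons_le)
  also have "\<dots> = complex_of_real a *\<^sub>C x + (\<Sum>k\<le>degree p. complex_of_real (coeff p k) *\<^sub>C (Y ^^ Suc k) x)"
    by (subst sum.atMost_Suc_shift) simp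
  also have "(\<Sum>k\<le>degree p. complex_of_real (coeff p k) *\<^sub>C (Y ^^ Suc k) x) = Y (peval p Y x)"
    unfolding peval_def by (simp add: bounded_op_sum[OF Y] bounded_opD[OF Y])
  finally show ?thesis .
qed

lemma peval_linear:
  assumes Y: "bounded_op Y"
  shows "peval p Y (x + y) = peval p Y x + peval p Y y" "peval p Y (c *\<^sub>C x) = c *\<^sub>C peval p Y x"
proof -
  have "bounded_op (Y ^^ k)" for k
    by (induction k) (auto simp: bounded_op_id intro: bounded_op_comp[OF Y, unfolded o_def])
  then show "peval p Y (x + y) = peval p Y x + peval p Y y" "peval p Y (c *\<^sub>C x) = c *\<^sub>C peval p Y x"
    unfolding peval_def by (simp_all add: bounded_opD scaleC_add_right sum.distrib scaleC_sum scaleC_scaleC mult.commute)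
qed

lemma peval_mult:
  assumes Y: "bounded_op Y"
  shows "peval (p * q) Y x = peval p Y (peval q Y x)"
proof (induction p arbitrary: x)
  case 0
  then show ?case by simp
next
  case (pCons a p)
  have "peval (pCons a p * q) Y x = peval (smult a q + pCons 0 (p * q)) Y x"
    by simp
  also have "\<dots> = complex_of_real a *\<^sub>C peval q Y x + Y (peval p Y (peval q Y x))"
    by (simp add: peval_add peval_smult peval_pCons[OF Y] pCons.IH)
  also have "\<dots> = peval (pCons a p) Y (peval q Y x)"
    by (simp add: peval_pCons[OF Y])
  finally show ?case .
qed

lemma peval_X: "bounded_op Y \<Longrightarrow> peval [:0, 1:] Y x = Y x"
  by (simp add: peval_pCons bounded_op_zero scaleC_one)

lemma peval_const: "bounded_op Y \<Longrightarrow> peval [:a:] Y x = complex_of_real a *\<^sub>C x"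
  by (simp add: peval_pCons bounded_op_zero)

definition psd :: "('h::complex_hilbert \<Rightarrow> 'h) \<Rightarrow> bool" where
  "psd T \<longleftrightarrow> hsym T \<and> (\<forall>x. 0 \<le> Re (cinner x (T x)))"

definition nonneg_coeffs :: "real poly \<Rightarrow> bool" where
  "nonneg_coeffs p \<longleftrightarrow> (\<forall>k. 0 \<le> coeff p k)"

lemma nonneg_coeffs_add: "nonneg_coeffs p \<Longrightarrow> nonneg_coeffs q \<Longrightarrow> nonneg_coeffs (p + q)"
  by (simp add: nonneg_coeffs_def)

lemma nonneg_coeffs_smult: "0 \<le> a \<Longrightarrow> nonneg_coeffs p \<Longrightarrow> nonneg_coeffs (smult a p)"
  by (simp add: nonneg_coeffs_def)

lemma nonneg_coeffs_mult: "nonneg_coeffs p \<Longrightarrow> nonneg_coeffs q \<Longrightarrow> nonneg_coeffs (p * q)"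
  unfolding nonneg_coeffs_def coeff_mult by (auto intro!: sum_nonneg)

lemma nonneg_coeffs_X: "nonneg_coeffs [:0, 1:]"
  by (simp add: nonneg_coeffs_def coeff_pCons split: nat.split)

lemma nonneg_coeffs_0: "nonneg_coeffs 0"
  by (simp add: nonneg_coeffs_def)

lemma hsym_funpow: "hsym Y \<Longrightarrow> hsym (Y ^^ k)"
  by (induction k) (auto simp: hsym_def funpow_swap1)

lemma psd_funpow:
  assumes s: "hsym Y" and p: "\<And>x. 0 \<le> Re (cinner x (Y x))"
  shows "0 \<le> Re (cinner x ((Y ^^ k) x))"
proof -
  have "k = 2 * (k div 2) \<or> k = Suc (2 * (k div 2))" by presburger
  then obtain j where "k = 2 * j \<or> k = Suc (2 * j)" by blast
  then show ?thesis
  proof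
    assume k: "k = 2 * j"
    have "(Y ^^ k) x = (Y ^^ j) ((Y ^^ j) x)" unfolding k by (simp add: mult_2 funpow_add)
    then have "cinner x ((Y ^^ k) x) = cinner ((Y ^^ j) x) ((Y ^^ j) x)"
      using hsym_funpow[OF s, of j] unfolding hsym_def by metis
    then show ?thesis by (simp add: cinner_self_nonneg)
  next
    assume k: "k = Suc (2 * j)"
    have "(Y ^^ k) x = (Y ^^ j) (Y ((Y ^^ j) x))" unfolding k
      by (simp add: mult_2 funpow_add funpow_swap1)
    then have "cinner x ((Y ^^ k) x) = cinner ((Y ^^ j) x) (Y ((Y ^^ j) x))"
      using hsym_funpow[OF s, of j] unfolding hsym_def by metis
    then show ?thesis using p by simp
  qed
qed

lemma peval_form:
  "cinner x (peval p Y x) = (\<Sum>k\<le>degree p. complex_of_real (coeff p k) * cinner x ((Y ^^ k) x))"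
  unfolding peval_def by (simp add: cinner_sum_right cinner_scaleC_right)

lemma peval_psd_form:
  assumes s: "hsym Y" and p: "\<And>x. 0 \<le> Re (cinner x (Y x))" and c: "nonneg_coeffs p"
  shows "0 \<le> Re (cinner x (peval p Y x))"
  unfolding peval_form Re_sum using c psd_funpow[OF s p]
  by (auto simp: nonneg_coeffs_def intro!: sum_nonneg mult_nonneg_nonneg)

lemma contraction_norm:
  assumes Y: "bounded_op Y" "hsym Y" and p: "\<And>x. 0 \<le> Re (cinner x (Y x))"
    and b: "\<And>x. Re (cinner x (Y x)) \<le> (hnorm x)\<^sup>2"
  shows "hnorm (Y x) \<le> hnorm x"
proof -
  have "(hnorm (Y x))\<^sup>2 \<le> 1 * Re (cinner x (Y x))"
    by (rule pos_op_norm_bound[OF Y p]) (simp add: b)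
  also have "\<dots> \<le> (hnorm x)\<^sup>2" using b by simp
  finally show ?thesis by (rule power2_le_imp_le) simp
qed

lemma peval_bound_form:
  assumes Y: "bounded_op Y" "hsym Y" and p: "\<And>x. 0 \<le> Re (cinner x (Y x))"
    and b: "\<And>x. Re (cinner x (Y x)) \<le> (hnorm x)\<^sup>2" and c: "nonneg_coeffs q"
  shows "Re (cinner x (peval q Y x)) \<le> poly q 1 * (hnorm x)\<^sup>2"
proof -
  have pw: "hnorm ((Y ^^ k) x) \<le> hnorm x" for k x
  proof (induction k arbitrary: x)
    case (Suc k)
    have "hnorm ((Y ^^ Suc k) x) = hnorm (Y ((Y ^^ k) x))" by simp
    also have "\<dots> \<le> hnorm ((Y ^^ k) x)" by (rule contraction_norm[OF Y p b])
    also have "\<dots> \<le> hnorm x" by (rule Suc.IH)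
    finally show ?case .
  qed simp
  have t: "Re (cinner x ((Y ^^ k) x)) \<le> (hnorm x)\<^sup>2" for k
  proof -
    have "Re (cinner x ((Y ^^ k) x)) \<le> hnorm x * hnorm ((Y ^^ k) x)" by (rule Re_cinner_le)
    also have "\<dots> \<le> hnorm x * hnorm x" by (intro mult_left_mono pw) simp
    finally show ?thesis by (simp add: power2_eq_square)
  qed
  have "Re (cinner x (peval q Y x)) = (\<Sum>k\<le>degree q. coeff q k * Re (cinner x ((Y ^^ k) x)))"
    unfolding peval_form Re_sum by simp
  also have "\<dots> \<le> (\<Sum>k\<le>degree q. coeff q k * (hnorm x)\<^sup>2)"
    using c t by (intro sum_mono mult_left_mono) (auto simp: nonneg_coeffs_def)
  also have "\<dots> = poly q 1 * (hnorm x)\<^sup>2"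
    by (simp add: poly_altdef sum_distrib_right)
  finally show ?thesis .
qed


lemma hsym_real_scale: "hsym T \<Longrightarrow> hsym (\<lambda>x. complex_of_real r *\<^sub>C T x)"
  unfolding hsym_def by (simp add: cinner_scaleC_left cinner_scaleC_right)

lemma Re_form_real_scale: "Re (cinner x (complex_of_real r *\<^sub>C T x)) = r * Re (cinner x (T x))"
  by (simp add: cinner_scaleC_right)

lemma cinner_self_form: "Re (cinner x x) = (hnorm x)\<^sup>2"
  by (simp add: hnorm_sq)

lemma psd_idem:
  assumes "hsym E" "\<And>x. E (E x) = E x" shows "psd E"
proof -
  have "cinner x (E x) = cinner (E x) (E x)" for x using assms unfolding hsym_def by metis
  then show ?thesis using assms(1) unfolding psd_def by (simp add: cinner_self_nonneg)
qed

fun sq :: "nat \<Rightarrow> real poly" where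
  "sq 0 = 0"
| "sq (Suc n) = smult (1/2) ([:0, 1:] + sq n * sq n)"

lemma sq_nonneg: "nonneg_coeffs (sq n)"
  by (induction n) (auto intro!: nonneg_coeffs_smult nonneg_coeffs_add nonneg_coeffs_mult nonneg_coeffs_X nonneg_coeffs_0)

lemma sq_diff_nonneg: "nonneg_coeffs (sq (Suc n) - sq n)"
proof (induction n)
  case 0
  then show ?case by (simp add: nonneg_coeffs_def coeff_pCons split: nat.split)
next
  case (Suc n)
  have eq: "sq (Suc (Suc n)) - sq (Suc n) = smult (1/2) ((sq (Suc n) + sq n) * (sq (Suc n) - sq n))"
    by (simp only: sq.simps) (simp add: algebra_simps smult_add_right smult_diff_right)
  show ?case unfolding eq
    by (intro nonneg_coeffs_smult nonneg_coeffs_mult nonneg_coeffs_add sq_nonneg Suc.IH) simp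
qed

lemma sq_one: "0 \<le> poly (sq n) 1 \<and> poly (sq n) 1 \<le> 1"
proof (induction n)
  case (Suc n)
  then have "(poly (sq n) 1)\<^sup>2 \<le> 1" by (simp add: power_le_one)
  then show ?case by (simp add: power2_eq_square add_nonneg_nonneg)
qed simp

context vna
begin

lemma peval_fun: "Y \<in> M \<Longrightarrow> peval (pCons a p) Y = (\<lambda>x. complex_of_real a *\<^sub>C x + Y (peval p Y x))"
  by (rule ext) (simp add: peval_pCons bops)

lemma pevalM: "Y \<in> M \<Longrightarrow> peval p Y \<in> M"
proof (induction p)
  case 0
  have e: "peval 0 Y = (\<lambda>x. 0)" by (rule ext) simp
  show ?case unfolding e by (rule zeroM)
next
  case (pCons a p)
  have "peval p Y \<in> M" using pCons by blast
  then show ?case unfolding peval_fun[OF pCons.prems]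
    by (intro addM scaleM[OF idM] compM[OF pCons.prems])
qed

lemma peval_hsym: "Y \<in> M \<Longrightarrow> hsym Y \<Longrightarrow> hsym (peval p Y)"
proof (induction p)
  case 0
  then show ?case by (simp add: hsym_def)
next
  case (pCons a p)
  have P: "peval p Y \<in> M" using pevalM pCons.prems by blast
  have "cinner (Y (peval p Y x)) y = cinner x (Y (peval p Y y))" for x y
  proof -
    have "cinner (Y (peval p Y x)) y = cinner (peval p Y x) (Y y)" using pCons.prems(2) unfolding hsym_def by blast
    also have "\<dots> = cinner x (peval p Y (Y y))" using pCons.IH[OF pCons.prems] unfolding hsym_def by blast
    also have "\<dots> = cinner x (Y (peval p Y y))" using commute[OF P pCons.prems(1)] by simp
    finally show ?thesis .
  qed
  then show ?case unfolding peval_fun[OF pCons.prems(1)] hsym_def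
    by (simp add: cinner_add_left cinner_add_right cinner_scaleC_left cinner_scaleC_right)
qed

lemma sqrt_contraction:
  assumes WM: "W \<in> M" and Ws: "hsym W" and Wp: "\<And>x. 0 \<le> Re (cinner x (W x))"
    and Wb: "\<And>x. Re (cinner x (W x)) \<le> (hnorm x)\<^sup>2"
  shows "\<exists>S\<in>M. psd S \<and> (\<forall>x. S (S x) = W x)"
proof -
  define Y where "Y = (\<lambda>x. x - W x)"
  have YM: "Y \<in> M" unfolding Y_def by (intro diffM idM WM)
  have Yb: "bounded_op Y" using bops[OF YM] .
  have Ys: "hsym Y" using Ws unfolding Y_def hsym_def by (simp add: cinner_diff_left cinner_diff_right)
  have YRe: "Re (cinner x (Y x)) = (hnorm x)\<^sup>2 - Re (cinner x (W x))" for x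
    unfolding Y_def by (simp add: cinner_diff_right hnorm_sq)
  have Yp: "0 \<le> Re (cinner x (Y x))" for x using YRe Wb by simp
  have Ybd: "Re (cinner x (Y x)) \<le> (hnorm x)\<^sup>2" for x using YRe Wp by simp
  define Z where "Z n = peval (sq n) Y" for n
  have ZM: "Z n \<in> M" for n unfolding Z_def by (rule pevalM[OF YM])
  have Zs: "hsym (Z n)" for n unfolding Z_def by (rule peval_hsym[OF YM Ys])
  have inc: "Re (cinner x (Z n x)) \<le> Re (cinner x (Z (Suc n) x))" for n x
  proof -
    have "0 \<le> Re (cinner x (peval (sq (Suc n) - sq n) Y x))"
      by (rule peval_psd_form[OF Ys Yp sq_diff_nonneg])
    then show ?thesis unfolding Z_def peval_diff by (simp add: cinner_diff_right)
  qed
  have bnd: "Re (cinner x (Z n x)) \<le> 1 * (hnorm x)\<^sup>2" for n x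
  proof -
    have "Re (cinner x (Z n x)) \<le> poly (sq n) 1 * (hnorm x)\<^sup>2"
      unfolding Z_def by (rule peval_bound_form[OF Yb Ys Yp Ybd sq_nonneg])
    also have "\<dots> \<le> 1 * (hnorm x)\<^sup>2" using sq_one[of n] by (intro mult_right_mono) auto
    finally show ?thesis .
  qed
  obtain Zl K where ZlM: "Zl \<in> M" and Zls: "hsym Zl" and Zlim: "\<And>x. hlim (\<lambda>n. Z n x) (Zl x)"
    and K: "\<And>n x. hnorm (Z n x) \<le> K * hnorm x"
    using mono_conv[where X=Z and c=1, OF ZM Zs inc bnd] by blast
  have rec: "Z (Suc n) x = complex_of_real (1/2) *\<^sub>C (Y x + Z n (Z n x))" for n x
    unfolding Z_def by (simp add: peval_smult peval_add peval_X[OF Yb] peval_mult[OF Yb])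
  have lim2: "hlim (\<lambda>n. Z n (Z n x)) (Zl (Zl x))" for x
  proof (rule hlim_squeeze)
    show "hnorm (Z n (Z n x) - Zl (Zl x)) \<le> K * hnorm (Z n x - Zl x) + hnorm (Z n (Zl x) - Zl (Zl x))" for n
    proof -
      have "Z n (Z n x) - Zl (Zl x) = Z n (Z n x - Zl x) + (Z n (Zl x) - Zl (Zl x))"
        by (simp add: bounded_op_diff[OF bops[OF ZM]])
      then have "hnorm (Z n (Z n x) - Zl (Zl x)) \<le> hnorm (Z n (Z n x - Zl x)) + hnorm (Z n (Zl x) - Zl (Zl x))"
        using hnorm_triangle by metis
      then show ?thesis using K[of n "Z n x - Zl x"] by simp
    qed
    have "(\<lambda>n. K * hnorm (Z n x - Zl x) + hnorm (Z n (Zl x) - Zl (Zl x))) \<longlonglongrightarrow> K * 0 + 0"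
      using Zlim[of x] Zlim[of "Zl x"] unfolding hlim_def by (intro tendsto_add tendsto_mult tendsto_const)
    then show "(\<lambda>n. K * hnorm (Z n x - Zl x) + hnorm (Z n (Zl x) - Zl (Zl x))) \<longlonglongrightarrow> 0" by simp
  qed
  have fixeq: "Zl x = complex_of_real (1/2) *\<^sub>C (Y x + Zl (Zl x))" for x
  proof -
    have "hlim (\<lambda>n. Z (Suc n) x) (Zl x)" by (rule hlim_shift[OF Zlim])
    moreover have "hlim (\<lambda>n. Z (Suc n) x) (complex_of_real (1/2) *\<^sub>C (Y x + Zl (Zl x)))"
      unfolding rec by (intro hlim_scaleC hlim_add hlim_const lim2)
    ultimately show ?thesis by (rule hlim_unique)
  qed
  have fix2: "Zl (Zl x) = Zl x + Zl x - Y x" for x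
  proof -
    have "complex_of_real 2 *\<^sub>C Zl x = complex_of_real 2 *\<^sub>C (complex_of_real (1/2) *\<^sub>C (Y x + Zl (Zl x)))"
      using fixeq[of x] by simp
    also have "\<dots> = Y x + Zl (Zl x)" by (simp add: scaleC_scaleC scaleC_one)
    finally have "complex_of_real 2 *\<^sub>C Zl x = Y x + Zl (Zl x)" .
    moreover have "complex_of_real 2 *\<^sub>C Zl x = Zl x + Zl x"
      using scaleC_add_left[of 1 1 "Zl x"] by (simp add: scaleC_one)
    ultimately show ?thesis by (simp add: algebra_simps)
  qed
  have Zlb: "Re (cinner x (Zl x)) \<le> (hnorm x)\<^sup>2" for x
  proof -
    have "(\<lambda>n. Re (cinner x (Z n x))) \<longlonglongrightarrow> Re (cinner x (Zl x))"
      by (intro tendsto_Re hlim_cinner_right Zlim)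
    then show ?thesis using bnd by (intro LIMSEQ_le_const2) auto
  qed
  define S where "S = (\<lambda>x. x - Zl x)"
  have SM: "S \<in> M" unfolding S_def by (intro diffM idM ZlM)
  have Ss: "hsym S" using Zls unfolding S_def hsym_def by (simp add: cinner_diff_left cinner_diff_right)
  have Sp: "0 \<le> Re (cinner x (S x))" for x
    using Zlb[of x] unfolding S_def by (simp add: cinner_diff_right hnorm_sq)
  have SS: "S (S x) = W x" for x
  proof -
    have "S (S x) = x - Zl x - Zl (x - Zl x)" unfolding S_def by simp
    also have "\<dots> = x - Zl x - (Zl x - Zl (Zl x))" by (simp add: bounded_op_diff[OF bops[OF ZlM]])
    also have "\<dots> = x - Y x" unfolding fix2 by (simp add: algebra_simps)
    also have "\<dots> = W x" unfolding Y_def by simp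
    finally show ?thesis .
  qed
  show ?thesis using SM Ss Sp SS unfolding psd_def by blast
qed

lemma form_bound:
  assumes "A \<in> M" obtains K where "K > 0" "\<And>x. Re (cinner x (A x)) \<le> K * (hnorm x)\<^sup>2"
proof -
  obtain K where K: "K > 0" "\<And>x. hnorm (A x) \<le> K * hnorm x" using bounded_op_bound[OF bops[OF assms]] by blast
  have "Re (cinner x (A x)) \<le> K * (hnorm x)\<^sup>2" for x
  proof -
    have "Re (cinner x (A x)) \<le> hnorm x * hnorm (A x)" by (rule Re_cinner_le)
    also have "\<dots> \<le> hnorm x * (K * hnorm x)" by (intro mult_left_mono K(2)) simp
    finally show ?thesis by (simp add: power2_eq_square algebra_simps)
  qed
  then show ?thesis using K(1) that by blast
qed

lemma sqrt_psd:
  assumes WM: "W \<in> M" and W: "psd W"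
  shows "\<exists>S\<in>M. psd S \<and> (\<forall>x. S (S x) = W x)"
proof -
  obtain K where K: "K > 0" "\<And>x. Re (cinner x (W x)) \<le> K * (hnorm x)\<^sup>2" using form_bound[OF WM] by blast
  define W' where "W' = (\<lambda>x. complex_of_real (1/K) *\<^sub>C W x)"
  have W'M: "W' \<in> M" unfolding W'_def by (rule scaleM[OF WM])
  have W's: "hsym W'" unfolding W'_def using W by (intro hsym_real_scale) (simp add: psd_def)
  have W'p: "0 \<le> Re (cinner x (W' x))" for x
    unfolding W'_def Re_form_real_scale using W K(1) by (simp add: psd_def)
  have W'b: "Re (cinner x (W' x)) \<le> (hnorm x)\<^sup>2" for x
    unfolding W'_def Re_form_real_scale using K by (simp add: field_simps)
  obtain S' where S'M: "S' \<in> M" and S': "psd S'" and S'S': "\<And>x. S' (S' x) = W' x"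
    using sqrt_contraction[OF W'M W's W'p W'b] by blast
  define S where "S = (\<lambda>x. complex_of_real (sqrt K) *\<^sub>C S' x)"
  have SM: "S \<in> M" unfolding S_def by (rule scaleM[OF S'M])
  have Sp: "psd S" using S' K(1) unfolding psd_def S_def
    by (auto intro: hsym_real_scale mult_nonneg_nonneg simp: Re_form_real_scale)
  have SS: "S (S x) = W x" for x
  proof -
    have "S (S x) = complex_of_real (sqrt K) *\<^sub>C (complex_of_real (sqrt K) *\<^sub>C S' (S' x))"
      unfolding S_def by (simp add: bounded_opD[OF bops[OF S'M]])
    also have "\<dots> = complex_of_real K *\<^sub>C W' x"
      using K(1) by (simp add: scaleC_scaleC S'S' flip: of_real_mult)
    also have "\<dots> = W x" unfolding W'_def using K(1) by (simp add: scaleC_scaleC scaleC_one flip: of_real_mult)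
    finally show ?thesis .
  qed
  show ?thesis using SM Sp SS by blast
qed

lemma psd_prod:
  assumes AM: "A \<in> M" and BM: "B \<in> M" and A: "psd A" and B: "psd B"
  shows "psd (\<lambda>x. A (B x))"
proof -
  have s: "hsym (\<lambda>x. A (B x))"
    using A B commute[OF AM BM] unfolding psd_def hsym_def by metis
  obtain S where SM: "S \<in> M" and S: "psd S" and SS: "\<And>x. S (S x) = A x" using sqrt_psd[OF AM A] by blast
  have "0 \<le> Re (cinner x (A (B x)))" for x
  proof -
    have "A (B x) = S (B (S x))" using SS[of "B x"] commute[OF SM BM] by simp
    then have "cinner x (A (B x)) = cinner (S x) (B (S x))"
      using S unfolding psd_def hsym_def by metis
    then show ?thesis using B unfolding psd_def by simp
  qed
  then show ?thesis using s unfolding psd_def by blast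
qed

end


lemma two_half: "complex_of_real (1/2) *\<^sub>C (v + v) = (v::'h::complex_hilbert)"
proof -
  have "v + v = complex_of_real 2 *\<^sub>C v" using scaleC_add_left[of 1 1 v] by (simp add: scaleC_one)
  then show ?thesis by (simp add: scaleC_scaleC scaleC_one)
qed

context vna
begin

lemma psd_id: "psd (\<lambda>x. x)"
  unfolding psd_def hsym_def by (simp add: cinner_self_nonneg)

lemma psd_scale: "psd T \<Longrightarrow> 0 \<le> r \<Longrightarrow> psd (\<lambda>x. complex_of_real r *\<^sub>C T x)"
  unfolding psd_def by (auto intro: hsym_real_scale simp: Re_form_real_scale)

lemma funpowM: "U \<in> M \<Longrightarrow> U ^^ n \<in> M"
proof (induction n)
  case 0
  have "U ^^ 0 = (\<lambda>x. x)" by (simp add: fun_eq_iff)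
  then show ?case using idM by (simp only:)
next
  case (Suc n)
  have "(\<lambda>x. U ((U ^^ n) x)) \<in> M" using compM[OF Suc.prems Suc.IH[OF Suc.prems]] .
  then show ?case by (simp add: o_def)
qed

lemma kerproj:
  assumes YM: "Y \<in> M" and Ys: "hsym Y"
  shows "\<exists>E\<in>M. psd E \<and> (\<forall>x. E (E x) = E x) \<and> (\<forall>x. Y (E x) = 0) \<and> (\<forall>x. Y x = 0 \<longrightarrow> E x = x)
           \<and> (\<forall>X\<in>M. (\<forall>x. X (Y x) = 0) \<longrightarrow> (\<forall>x. X (E x) = X x))"
proof -
  obtain K where K: "K > 0" "\<And>x. hnorm (Y x) \<le> K * hnorm x" using bounded_op_bound[OF bops[OF YM]] by blast
  define c where "c = K\<^sup>2"
  have c0: "c > 0" using K(1) by (simp add: c_def)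
  define D where "D = (\<lambda>x. complex_of_real (1/c) *\<^sub>C Y (Y x))"
  have YYM: "(\<lambda>x. Y (Y x)) \<in> M" by (rule compM[OF YM YM])
  have DM: "D \<in> M" unfolding D_def by (rule scaleM[OF YYM])
  have YYs: "hsym (\<lambda>x. Y (Y x))" using Ys unfolding hsym_def by metis
  have Ds: "hsym D" unfolding D_def by (rule hsym_real_scale[OF YYs])
  have YYform: "cinner x (Y (Y x)) = cinner (Y x) (Y x)" for x using Ys unfolding hsym_def by metis
  have DRe: "Re (cinner x (D x)) = (1/c) * (hnorm (Y x))\<^sup>2" for x
  proof -
    have "Re (cinner x (D x)) = Re (cinner x (complex_of_real (1/c) *\<^sub>C Y (Y x)))" by (simp only: D_def)
    also have "\<dots> = (1/c) * Re (cinner x (Y (Y x)))" by (rule Re_form_real_scale)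
    also have "\<dots> = (1/c) * (hnorm (Y x))\<^sup>2" by (simp add: YYform hnorm_sq)
    finally show ?thesis .
  qed
  have Dpsd: "psd D" using Ds DRe c0 unfolding psd_def by simp
  have Dle: "Re (cinner x (D x)) \<le> (hnorm x)\<^sup>2" for x
  proof -
    have "(hnorm (Y x))\<^sup>2 \<le> (K * hnorm x)\<^sup>2" using K(2)[of x] by (intro power_mono) auto
    then have "(hnorm (Y x))\<^sup>2 \<le> c * (hnorm x)\<^sup>2" by (simp add: c_def power_mult_distrib)
    then show ?thesis unfolding DRe using c0 by (simp add: field_simps)
  qed
  define U where "U = (\<lambda>x. x - D x)"
  have UM: "U \<in> M" unfolding U_def by (rule diffM[OF idM DM])
  have Us: "hsym U" using Ds unfolding U_def hsym_def by (simp add: cinner_diff_left cinner_diff_right)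
  have Upsd: "psd U" using Us Dle unfolding psd_def U_def by (simp add: cinner_diff_right hnorm_sq)
  define V where "V n = U ^^ n" for n
  have VM: "V n \<in> M" for n unfolding V_def by (rule funpowM[OF UM])
  have Vs: "hsym (V n)" for n unfolding V_def by (rule hsym_funpow[OF Us])
  have VSuc: "V (Suc n) x = U (V n x)" for n x unfolding V_def by simp
  have Vpsd: "psd (V n)" for n
  proof (induction n)
    case 0 then show ?case using psd_id by (simp add: V_def)
  next
    case (Suc n)
    have "psd (\<lambda>x. U (V n x))" by (rule psd_prod[OF UM VM Upsd Suc.IH])
    then show ?case unfolding V_def by (simp add: o_def)
  qed
  have Vdiff: "V n x - V (Suc n) x = D (V n x)" for n x unfolding VSuc U_def by simp
  have dec: "Re (cinner x (V (Suc n) x)) \<le> Re (cinner x (V n x))" for n x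
  proof -
    have "psd (\<lambda>x. D (V n x))" by (rule psd_prod[OF DM VM Dpsd Vpsd])
    then have "0 \<le> Re (cinner x (D (V n x)))" unfolding psd_def by blast
    then show ?thesis using Vdiff[of n x] by (metis cinner_diff_right diff_ge_0_iff_ge minus_complex.sel(1))
  qed
  define X where "X n = (\<lambda>x. complex_of_real (-1) *\<^sub>C V n x)" for n
  have XM: "X n \<in> M" for n unfolding X_def by (rule scaleM[OF VM])
  have Xs: "hsym (X n)" for n unfolding X_def by (rule hsym_real_scale[OF Vs])
  have Xinc: "Re (cinner x (X n x)) \<le> Re (cinner x (X (Suc n) x))" for n x
    unfolding X_def Re_form_real_scale using dec[of x n] by simp
  have Xbnd: "Re (cinner x (X n x)) \<le> 0 * (hnorm x)\<^sup>2" for n x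
    unfolding X_def Re_form_real_scale using Vpsd[of n] unfolding psd_def by simp
  obtain L where LM: "L \<in> M" and Ls: "hsym L" and Llim: "\<And>x. hlim (\<lambda>n. X n x) (L x)"
    using mono_conv[where X = X and c = 0, OF XM Xs Xinc Xbnd] by blast
  define E where "E = (\<lambda>x. complex_of_real (-1) *\<^sub>C L x)"
  have EM: "E \<in> M" unfolding E_def by (rule scaleM[OF LM])
  have Es: "hsym E" unfolding E_def by (rule hsym_real_scale[OF Ls])
  have Elim: "hlim (\<lambda>n. V n x) (E x)" for x
  proof -
    have "hlim (\<lambda>n. complex_of_real (-1) *\<^sub>C X n x) (E x)" unfolding E_def by (rule hlim_scaleC[OF Llim])
    moreover have "(\<lambda>n. complex_of_real (-1) *\<^sub>C X n x) = (\<lambda>n. V n x)"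
      unfolding X_def by (simp add: scaleC_scaleC scaleC_one)
    ultimately show ?thesis by simp
  qed
  have DE: "D (E x) = 0" for x
  proof -
    have "hlim (\<lambda>n. D (V n x)) (D (E x))" by (rule hlim_bounded_op[OF bops[OF DM] Elim])
    moreover have "hlim (\<lambda>n. V n x - V (Suc n) x) (E x - E x)" by (intro hlim_diff Elim hlim_shift)
    then have "hlim (\<lambda>n. D (V n x)) 0" unfolding Vdiff by simp
    ultimately show ?thesis by (rule hlim_unique)
  qed
  have YYE: "Y (Y (E x)) = 0" for x
  proof -
    have "complex_of_real c *\<^sub>C D (E x) = Y (Y (E x))"
      unfolding D_def using c0 by (simp add: scaleC_scaleC scaleC_one flip: of_real_mult)
    then show ?thesis using DE by simp
  qed
  have YE: "Y (E x) = 0" for x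
    using YYform[of "E x"] YYE[of x] by simp
  have UE: "U (E x) = E x" for x unfolding U_def by (simp add: DE)
  have VE: "V n (E x) = E x" for n x by (induction n) (simp_all add: V_def UE)
  have EE: "E (E x) = E x" for x
  proof -
    have "hlim (\<lambda>n. E x) (E (E x))" using Elim[of "E x"] unfolding VE .
    then show ?thesis using hlim_const by (rule hlim_unique)
  qed
  have ker: "E x = x" if "Y x = 0" for x
  proof -
    have "U x = x" unfolding U_def D_def using that by (simp add: bounded_op_zero[OF bops[OF YM]])
    then have "V n x = x" for n by (induction n) (simp_all add: V_def)
    then have "hlim (\<lambda>n. x) (E x)" using Elim[of x] by simp
    then show ?thesis using hlim_const by (rule hlim_unique)
  qed
  have absorb: "X' (E x) = X' x" if X'M: "X' \<in> M" and X'Y: "\<And>x. X' (Y x) = 0" for X' x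
  proof -
    have X'b: "bounded_op X'" using bops[OF X'M] .
    have "X' (D x) = 0" for x unfolding D_def by (simp add: bounded_opD[OF X'b] X'Y)
    then have "X' (U x) = X' x" for x unfolding U_def by (simp add: bounded_op_diff[OF X'b])
    then have "X' (V n x) = X' x" for n by (induction n) (simp_all add: V_def)
    moreover have "hlim (\<lambda>n. X' (V n x)) (X' (E x))" by (rule hlim_bounded_op[OF X'b Elim])
    ultimately have "hlim (\<lambda>n. X' x) (X' (E x))" by simp
    then show ?thesis using hlim_const by (rule hlim_unique)
  qed
  have Epsd: "psd E" by (rule psd_idem[OF Es EE])
  show ?thesis using EM Epsd EE YE ker absorb by blast
qed

lemma decomp:
  assumes BM: "B \<in> M" and Bs: "hsym B"
  shows "\<exists>P\<in>M. \<exists>N\<in>M. psd P \<and> psd N \<and> (\<forall>x. B x = P x - N x) \<and> (\<forall>x. P (N x) = 0) \<and> (\<forall>x. N (P x) = 0)"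
proof -
  have BBM: "(\<lambda>x. B (B x)) \<in> M" by (rule compM[OF BM BM])
  have BBform: "cinner x (B (B x)) = cinner (B x) (B x)" for x using Bs unfolding hsym_def by metis
  have BBpsd: "psd (\<lambda>x. B (B x))"
  proof -
    have "0 \<le> Re (cinner x (B (B x)))" for x using BBform[of x] cinner_self_nonneg[of "B x"] by simp
    moreover have "hsym (\<lambda>x. B (B x))" using Bs unfolding hsym_def by metis
    ultimately show ?thesis unfolding psd_def by blast
  qed
  obtain W where WM: "W \<in> M" and Wpsd: "psd W" and WW: "\<And>x. W (W x) = B (B x)"
    using sqrt_psd[OF BBM BBpsd] by blast
  have Ws: "hsym W" using Wpsd by (simp add: psd_def)
  have Wb: "bounded_op W" using bops[OF WM] .
  have Bb: "bounded_op B" using bops[OF BM] .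
  have WB: "W (B x) = B (W x)" for x by (rule commute[OF WM BM])
  define Xp where "Xp = (\<lambda>x. W x + B x)"
  define Yn where "Yn = (\<lambda>x. W x - B x)"
  have XpM: "Xp \<in> M" unfolding Xp_def by (rule addM[OF WM BM])
  have YnM: "Yn \<in> M" unfolding Yn_def by (rule diffM[OF WM BM])
  have Xps: "hsym Xp" using Ws Bs unfolding Xp_def hsym_def by (simp add: cinner_add_left cinner_add_right)
  have Yns: "hsym Yn" using Ws Bs unfolding Yn_def hsym_def by (simp add: cinner_diff_left cinner_diff_right)
  have XY: "Xp (Yn x) = 0" for x
    unfolding Xp_def Yn_def by (simp add: bounded_op_diff[OF Wb] bounded_op_diff[OF Bb] WW WB)
  have YX: "Yn (Xp x) = 0" for x
    unfolding Xp_def Yn_def by (simp add: bounded_opD[OF Wb] bounded_opD[OF Bb] WW WB)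
  have Xppsd: "psd Xp"
  proof -
    obtain E where EM: "E \<in> M" and Epsd: "psd E" and YE: "\<And>x. Yn (E x) = 0"
      and abs: "\<And>X x. X \<in> M \<Longrightarrow> (\<And>x. X (Yn x) = 0) \<Longrightarrow> X (E x) = X x"
      using kerproj[OF YnM Yns] by metis
    have "Xp x = W (E x) + W (E x)" for x
    proof -
      have "Xp x = Xp (E x)" using abs[OF XpM XY] by metis
      also have "\<dots> = W (E x) + W (E x)" using YE[of x] unfolding Xp_def Yn_def by simp
      finally show ?thesis .
    qed
    moreover have "psd (\<lambda>x. W (E x))" by (rule psd_prod[OF WM EM Wpsd Epsd])
    ultimately show ?thesis using Xps unfolding psd_def by (simp add: cinner_add_right)
  qed
  have Ynpsd: "psd Yn"
  proof -
    obtain E where EM: "E \<in> M" and Epsd: "psd E" and XE: "\<And>x. Xp (E x) = 0"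
      and abs: "\<And>X x. X \<in> M \<Longrightarrow> (\<And>x. X (Xp x) = 0) \<Longrightarrow> X (E x) = X x"
      using kerproj[OF XpM Xps] by metis
    have "Yn x = W (E x) + W (E x)" for x
    proof -
      have "Yn x = Yn (E x)" using abs[OF YnM YX] by metis
      also have "\<dots> = W (E x) + W (E x)" using XE[of x] unfolding Xp_def Yn_def
        by (simp add: eq_neg_iff_add_eq_0[symmetric])
      finally show ?thesis .
    qed
    moreover have "psd (\<lambda>x. W (E x))" by (rule psd_prod[OF WM EM Wpsd Epsd])
    ultimately show ?thesis using Yns unfolding psd_def by (simp add: cinner_add_right)
  qed
  define P where "P = (\<lambda>x. complex_of_real (1/2) *\<^sub>C Xp x)"
  define N where "N = (\<lambda>x. complex_of_real (1/2) *\<^sub>C Yn x)"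
  have PM: "P \<in> M" unfolding P_def by (rule scaleM[OF XpM])
  have NM: "N \<in> M" unfolding N_def by (rule scaleM[OF YnM])
  have Ppsd: "psd P" unfolding P_def by (rule psd_scale[OF Xppsd]) simp
  have Npsd: "psd N" unfolding N_def by (rule psd_scale[OF Ynpsd]) simp
  have BPN: "B x = P x - N x" for x
  proof -
    have "P x - N x = complex_of_real (1/2) *\<^sub>C (Xp x - Yn x)" unfolding P_def N_def by (simp add: scaleC_diff_right)
    also have "Xp x - Yn x = B x + B x" unfolding Xp_def Yn_def by simp
    finally show ?thesis using two_half[of "B x"] by simp
  qed
  have PN: "P (N x) = 0" for x
    unfolding P_def N_def by (simp add: bounded_opD[OF bops[OF XpM]] XY)
  have NP: "N (P x) = 0" for x
    unfolding P_def N_def by (simp add: bounded_opD[OF bops[OF YnM]] YX)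
  show ?thesis using PM NM Ppsd Npsd BPN PN NP by blast
qed

end


lemma psd_pos: "psd T \<Longrightarrow> pos T"
  unfolding psd_def pos_def using hsym_form_real by blast

lemma psd_op_le_zero: "psd T \<Longrightarrow> op_le zero_op T"
  unfolding op_le_def zero_op_def psd_def using hsym_form_real by auto

context vna
begin

lemma projD:
  assumes "Q \<in> projections M"
  shows "Q \<in> M" "\<And>x. Q (Q x) = Q x" "hsym Q"
proof -
  show QM: "Q \<in> M" using assms by (simp add: projections_def)
  show "Q (Q x) = Q x" for x using assms by (simp add: projections_def fun_eq_iff)
  show "hsym Q" using assms adj_self_iff[OF bops[OF QM]] by (simp add: projections_def)
qed

lemma projI:
  assumes "Q \<in> M" "\<And>x. Q (Q x) = Q x" "hsym Q"
  shows "Q \<in> projections M"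
  using assms adj_self_iff[OF bops[OF assms(1)]] by (simp add: projections_def fun_eq_iff)

lemma proj_psd: "Q \<in> projections M \<Longrightarrow> psd Q"
  using projD psd_idem by blast

lemma spectral_proj_facts:
  assumes AM: "A \<in> M" and As: "hsym A"
  shows "spectral_proj M A l \<in> projections M
    \<and> op_le (A \<circ> spectral_proj M A l) (\<lambda>x. complex_of_real l *\<^sub>C spectral_proj M A l x)
    \<and> (\<exists>P\<in>M. psd P \<and> (\<forall>x. P x = (A x - complex_of_real l *\<^sub>C x)
           - (A (spectral_proj M A l x) - complex_of_real l *\<^sub>C spectral_proj M A l x)))"
proof -
  define B where "B = (\<lambda>x. A x - complex_of_real l *\<^sub>C x)"
  have BM: "B \<in> M" unfolding B_def by (rule diffM[OF AM scaleM[OF idM]])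
  have Bs: "hsym B" using As unfolding B_def hsym_def
    by (simp add: cinner_diff_left cinner_diff_right cinner_scaleC_left cinner_scaleC_right)
  obtain P N where PM: "P \<in> M" and NM: "N \<in> M" and Ppsd: "psd P" and Npsd: "psd N"
    and BPN: "\<And>x. B x = P x - N x" and PN: "\<And>x. P (N x) = 0" and NP: "\<And>x. N (P x) = 0"
    using decomp[OF BM Bs] by blast
  have Ps: "hsym P" using Ppsd by (simp add: psd_def)
  obtain E where EM: "E \<in> M" and Epsd: "psd E" and EE: "\<And>x. E (E x) = E x" and PE: "\<And>x. P (E x) = 0"
    and ker: "\<And>x. P x = 0 \<Longrightarrow> E x = x"
    and absorb: "\<And>X x. X \<in> M \<Longrightarrow> (\<And>x. X (P x) = 0) \<Longrightarrow> X (E x) = X x"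
    using kerproj[OF PM Ps] by metis
  have Es: "hsym E" using Epsd by (simp add: psd_def)
  have NE: "N (E x) = N x" for x using absorb[OF NM NP] by metis
  have Eproj: "E \<in> projections M" by (rule projI[OF EM EE Es])
  have Bb: "bounded_op B" using bops[OF BM] .
  have Ab: "bounded_op A" using bops[OF AM] .
  have AE_eq: "(\<lambda>x. complex_of_real l *\<^sub>C E x - (A \<circ> E) x) = (\<lambda>x. N (E x))"
  proof
    fix x
    have "complex_of_real l *\<^sub>C E x - (A \<circ> E) x = - B (E x)" unfolding B_def by simp
    also have "\<dots> = N (E x)" unfolding BPN PE by simp
    finally show "complex_of_real l *\<^sub>C E x - (A \<circ> E) x = N (E x)" .
  qed
  have Ele: "op_le (A \<circ> E) (\<lambda>x. complex_of_real l *\<^sub>C E x)"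
    unfolding op_le_pos AE_eq by (rule psd_pos[OF psd_prod[OF NM EM Npsd Epsd]])
  have maxi: "op_le Q E" if Qproj: "Q \<in> projections M" and Qle: "op_le (A \<circ> Q) (\<lambda>x. complex_of_real l *\<^sub>C Q x)" for Q
  proof -
    have QM: "Q \<in> M" and QQ: "\<And>x. Q (Q x) = Q x" and Qs: "hsym Q" using projD[OF Qproj] by auto
    define G where "G = (\<lambda>x. complex_of_real l *\<^sub>C Q x - (A \<circ> Q) x)"
    have GM: "G \<in> M" unfolding G_def by (rule diffM[OF scaleM[OF QM] compM'[OF AM QM]])
    have Gpos: "pos G" using Qle unfolding op_le_pos G_def .
    have Gpsd: "psd G" using Gpos pos_hsym[OF bops[OF GM] Gpos] unfolding psd_def pos_def by blast
    have GB: "G x = - B (Q x)" for x unfolding G_def B_def by simp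
    have PGpsd: "psd (\<lambda>x. P (G x))" by (rule psd_prod[OF PM GM Ppsd Gpsd])
    have QP: "Q (P x) = 0" for x
    proof -
      have PP: "P (P x) = P (B x)" for x
      proof -
        have "P x = B x + N x" using BPN[of x] by simp
        then have "P (P x) = P (B x) + P (N x)" using bounded_opD(1)[OF bops[OF PM]] by metis
        then show ?thesis by (simp add: PN)
      qed
      have "P (Q (P x)) = - P (G x)"
      proof -
        have "P (Q (P x)) = Q (P (P x))" by (rule commute[OF PM QM])
        also have "\<dots> = Q (P (B x))" by (simp add: PP)
        also have "\<dots> = P (Q (B x))" by (rule commute[OF QM PM])
        also have "\<dots> = P (B (Q x))" by (simp add: commute[OF QM BM])
        also have "\<dots> = - P (G x)" by (simp add: GB bounded_op_minus[OF bops[OF PM]])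
        finally show ?thesis .
      qed
      moreover have "cinner x (P (Q (P x))) = cinner (Q (P x)) (Q (P x))"
      proof -
        have "cinner x (P (Q (P x))) = cinner (P x) (Q (P x))" using Ps unfolding hsym_def by metis
        also have "\<dots> = cinner (P x) (Q (Q (P x)))" by (simp add: QQ)
        also have "\<dots> = cinner (Q (P x)) (Q (P x))" using Qs unfolding hsym_def by metis
        finally show ?thesis .
      qed
      ultimately have "cinner (Q (P x)) (Q (P x)) = - cinner x (P (G x))"
        by (simp add: cinner_minus_right)
      then have "Re (cinner (Q (P x)) (Q (P x))) = - Re (cinner x (P (G x)))" by simp
      moreover have "0 \<le> Re (cinner x (P (G x)))" using PGpsd unfolding psd_def by blast
      ultimately have "Re (cinner (Q (P x)) (Q (P x))) \<le> 0" by simp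
      then have "(hnorm (Q (P x)))\<^sup>2 \<le> 0" by (simp add: hnorm_sq)
      then show ?thesis by simp
    qed
    have EQ: "E (Q x) = Q x" for x
      using ker[of "Q x"] QP[of x] commute[OF PM QM] by simp
    define R where "R = (\<lambda>x. x - Q x)"
    have RM: "R \<in> M" unfolding R_def by (rule diffM[OF idM QM])
    have Rs: "hsym R" using Qs unfolding R_def hsym_def by (simp add: cinner_diff_left cinner_diff_right)
    have RR: "R (R x) = R x" for x unfolding R_def by (simp add: bounded_op_diff[OF bops[OF QM]] QQ)
    have Rpsd: "psd R" by (rule psd_idem[OF Rs RR])
    have eq: "(\<lambda>x. E x - Q x) = (\<lambda>x. E (R x))"
    proof
      fix x show "E x - Q x = E (R x)"
        unfolding R_def by (simp add: bounded_op_diff[OF bops[OF EM]] EQ)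
    qed
    show "op_le Q E" unfolding op_le_pos eq by (rule psd_pos[OF psd_prod[OF EM RM Epsd Rpsd]])
  qed
  have the_eq: "spectral_proj M A l = E"
    unfolding spectral_proj_def
  proof (rule the_equality)
    show "E \<in> projections M \<and> op_le (A \<circ> E) (\<lambda>x. complex_of_real l *\<^sub>C E x) \<and>
      (\<forall>Q\<in>projections M. op_le (A \<circ> Q) (\<lambda>x. complex_of_real l *\<^sub>C Q x) \<longrightarrow> op_le Q E)"
      using Eproj Ele maxi by blast
  next
    fix Q assume H: "Q \<in> projections M \<and> op_le (A \<circ> Q) (\<lambda>x. complex_of_real l *\<^sub>C Q x) \<and>
      (\<forall>Q'\<in>projections M. op_le (A \<circ> Q') (\<lambda>x. complex_of_real l *\<^sub>C Q' x) \<longrightarrow> op_le Q' Q)"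
    then have Qproj: "Q \<in> projections M" and QE: "op_le Q E" and EQ: "op_le E Q"
      using maxi Eproj Ele by blast+
    have QM: "Q \<in> M" using projD(1)[OF Qproj] .
    show "Q = E"
    proof (rule op_ext_form[OF bops[OF QM] bops[OF EM]])
      fix x
      have a: "cinner x (E x - Q x) \<in> \<real>" "0 \<le> Re (cinner x (E x - Q x))"
        using QE unfolding op_le_def by auto
      have b: "0 \<le> Re (cinner x (Q x - E x))"
        using EQ unfolding op_le_def by auto
      have "Re (cinner x (E x - Q x)) = 0" using a(2) b by (simp add: cinner_diff_right)
      then have "cinner x (E x - Q x) = 0" using a(1) by (metis complex_is_Real_iff complex_eq_iff zero_complex.simps)
      then show "cinner x (Q x) = cinner x (E x)" by (simp add: cinner_diff_right)
    qed
  qed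
  have Pform: "P x = (A x - complex_of_real l *\<^sub>C x) - (A (E x) - complex_of_real l *\<^sub>C E x)" for x
  proof -
    have "B x - B (E x) = P x - N x - (P (E x) - N (E x))" by (simp add: BPN)
    also have "\<dots> = P x" by (simp add: PE NE)
    finally show ?thesis unfolding B_def by simp
  qed
  show ?thesis unfolding the_eq using Eproj Ele PM Ppsd Pform by blast
qed

end


context vna
begin

lemma main:
  assumes AM: "A \<in> M" and As: "hsym A" and tau: "\<tau> \<in> gelfand_spectrum M"
  shows "complex_of_real (obs_fun M A (beta M \<tau>)) = \<tau> A"
proof -
  have tadd: "\<tau> (\<lambda>x. X x + Y x) = \<tau> X + \<tau> Y" if "X \<in> M" "Y \<in> M" for X Y
    using tau that unfolding gelfand_spectrum_def by blast
  have tsc: "\<tau> (\<lambda>x. a *\<^sub>C X x) = a * \<tau> X" if "X \<in> M" for X a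
    using tau that unfolding gelfand_spectrum_def by blast
  have tmul: "\<tau> (X \<circ> Y) = \<tau> X * \<tau> Y" if "X \<in> M" "Y \<in> M" for X Y
    using tau that unfolding gelfand_spectrum_def by blast
  have tpos: "\<tau> X \<in> \<real> \<and> 0 \<le> Re (\<tau> X)" if "X \<in> M" "op_le zero_op X" for X
    using tau that unfolding gelfand_spectrum_def by blast
  obtain X0 where X0M: "X0 \<in> M" and X0: "\<tau> X0 \<noteq> 0"
    using tau unfolding gelfand_spectrum_def by blast
  have tdiff: "\<tau> (\<lambda>x. X x - Y x) = \<tau> X - \<tau> Y" if XM: "X \<in> M" and YM: "Y \<in> M" for X Y
  proof -
    have "(\<lambda>x. X x - Y x) = (\<lambda>x. X x + (\<lambda>x. (-1) *\<^sub>C Y x) x)" by (simp add: scaleC_minus_one)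
    then have "\<tau> (\<lambda>x. X x - Y x) = \<tau> X + \<tau> (\<lambda>x. (-1) *\<^sub>C Y x)"
      using tadd[OF XM scaleM[OF YM]] by simp
    then show ?thesis using tsc[OF YM, of "-1"] by simp
  qed
  have tcomp: "\<tau> (\<lambda>x. X (Y x)) = \<tau> X * \<tau> Y" if "X \<in> M" "Y \<in> M" for X Y
    using tmul[OF that] by (simp add: o_def)
  have tid: "\<tau> (\<lambda>x. x) = 1"
  proof -
    have "\<tau> (\<lambda>x. X0 ((\<lambda>x. x) x)) = \<tau> X0 * \<tau> (\<lambda>x. x)" by (rule tcomp[OF X0M idM])
    then have "\<tau> X0 * 1 = \<tau> X0 * \<tau> (\<lambda>x. x)" by simp
    then show ?thesis using X0 by (metis mult_left_cancel)
  qed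
  have tpsd: "\<tau> X \<in> \<real> \<and> 0 \<le> Re (\<tau> X)" if "X \<in> M" "psd X" for X
    using tpos[OF that(1) psd_op_le_zero[OF that(2)]] .
  have treal: "\<tau> A \<in> \<real>"
  proof -
    obtain P N where PM: "P \<in> M" and NM: "N \<in> M" and Ppsd: "psd P" and Npsd: "psd N"
      and APN: "\<And>x. A x = P x - N x"
      using decomp[OF AM As] by blast
    have "A = (\<lambda>x. P x - N x)" using APN by (simp add: fun_eq_iff)
    then have "\<tau> A = \<tau> P - \<tau> N" using tdiff[OF PM NM] by simp
    then show ?thesis using tpsd[OF PM Ppsd] tpsd[OF NM Npsd] by simp
  qed
  define a where "a = Re (\<tau> A)"
  have tA: "\<tau> A = complex_of_real a" using treal unfolding a_def by (simp add: complex_is_Real_iff complex_eq_iff)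
  define E where "E l = spectral_proj M A l" for l
  have Efacts: "E l \<in> projections M \<and> op_le (A \<circ> E l) (\<lambda>x. complex_of_real l *\<^sub>C E l x)
    \<and> (\<exists>P\<in>M. psd P \<and> (\<forall>x. P x = (A x - complex_of_real l *\<^sub>C x) - (A (E l x) - complex_of_real l *\<^sub>C E l x)))" for l
    unfolding E_def by (rule spectral_proj_facts[OF AM As])
  have EM: "E l \<in> M" for l using Efacts[of l] by (simp add: projections_def)
  have tE: "\<tau> (E l) = 0 \<or> \<tau> (E l) = 1" for l
  proof -
    have "E l \<circ> E l = E l" using Efacts[of l] by (simp add: projections_def)
    then have "\<tau> (E l) = \<tau> (E l) * \<tau> (E l)" using tmul[OF EM EM, of l l] by simp
    then show ?thesis by (metis mult_cancel_left1)
  qed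
  have low: "a \<le> l" if "\<tau> (E l) = 1" for l
  proof -
    define F where "F = (\<lambda>x. complex_of_real l *\<^sub>C E l x - (A \<circ> E l) x)"
    have FM: "F \<in> M" unfolding F_def by (rule diffM[OF scaleM[OF EM] compM'[OF AM EM]])
    have "op_le zero_op F" using Efacts[of l] unfolding op_le_def zero_op_def F_def by simp
    then have "0 \<le> Re (\<tau> F)" using tpos[OF FM] by blast
    moreover have "\<tau> F = complex_of_real l * \<tau> (E l) - \<tau> A * \<tau> (E l)"
      unfolding F_def using tdiff[OF scaleM[OF EM] compM'[OF AM EM], of "complex_of_real l" l]
        tsc[OF EM, of "complex_of_real l" l] tmul[OF AM EM, of l] by simp
    ultimately show ?thesis using that tA by simp
  qed
  have high: "\<tau> (E l) = 1" if al: "a < l" for l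
  proof (rule ccontr)
    assume "\<tau> (E l) \<noteq> 1"
    then have t0: "\<tau> (E l) = 0" using tE by blast
    obtain P where PM: "P \<in> M" and Ppsd: "psd P"
      and Pf: "\<And>x. P x = (A x - complex_of_real l *\<^sub>C x) - (A (E l x) - complex_of_real l *\<^sub>C E l x)"
      using Efacts[of l] by blast
    define B where "B = (\<lambda>x. A x - complex_of_real l *\<^sub>C x)"
    have BM: "B \<in> M" unfolding B_def by (rule diffM[OF AM scaleM[OF idM]])
    have tB: "\<tau> B = complex_of_real (a - l)"
      unfolding B_def using tdiff[OF AM scaleM[OF idM], of "complex_of_real l"] tsc[OF idM, of "complex_of_real l"] tid tA
      by simp
    have "P = (\<lambda>x. B x - B (E l x))" using Pf unfolding B_def by (simp add: fun_eq_iff)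
    then have "\<tau> P = \<tau> B - \<tau> B * \<tau> (E l)"
      using tdiff[OF BM compM[OF BM EM]] tcomp[OF BM EM] by simp
    then have "\<tau> P = complex_of_real (a - l)" using t0 tB by simp
    moreover have "0 \<le> Re (\<tau> P)" using tpsd[OF PM Ppsd] by blast
    ultimately show False using al by simp
  qed
  define S where "S = {l. spectral_proj M A l \<in> beta M \<tau>}"
  have S_iff: "l \<in> S \<longleftrightarrow> \<tau> (E l) = 1" for l
    using Efacts[of l] unfolding S_def beta_def E_def by auto
  have ne: "S \<noteq> {}" using S_iff high[of "a + 1"] by auto
  have bdd: "bdd_below S" using S_iff low by (auto intro: bdd_belowI[of _ a])
  have "Inf S = a"
  proof (rule antisym)
    show "Inf S \<le> a"
    proof (rule field_le_epsilon)
      fix e :: real assume "0 < e"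
      then have "a + e \<in> S" using S_iff high by simp
      then show "Inf S \<le> a + e" using bdd by (rule cInf_lower)
    qed
    show "a \<le> Inf S" using ne S_iff low by (auto intro: cInf_greatest)
  qed
  then have "obs_fun M A (beta M \<tau>) = a" unfolding obs_fun_def S_def by simp
  then show ?thesis using tA by simp
qed

end

theorem theorem2p6:
  fixes M :: "('h::complex_hilbert \<Rightarrow> 'h) set"
  assumes "von_neumann_algebra M" and "abelian M"
    and "A \<in> self_adjoints M" and "\<tau> \<in> gelfand_spectrum M"
  shows "complex_of_real (obs_fun M A (beta M \<tau>)) = \<tau> A"
proof -
  interpret vna M using assms(1,2) by unfold_locales
  have AM: "A \<in> M" and adjA: "adj A = A" using assms(3) by (auto simp: self_adjoints_def)
  have "hsym A" using adjA adj_self_iff[OF bops[OF AM]] by simp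
  then show ?thesis by (rule main[OF AM _ assms(4)])
qed


end
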